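(* Let $N\ge 1$ and $n\ge 2$ be integers, let $V=\mathbb{C}^N$ with basis $e_0,\dots,e_{N-1}$, and let $\kappa,h,\nu_0,g_0,\nu_n,g_n$ be complex numbers with $h,g_0,g_n\neq 0$. Define operators on $V^{\otimes n}$ by $$\hat T_0=K^{\mathrm{ra}}_1(\nu_0,g_0),\qquad \hat T_j=\check R^{\mathrm{ra}}_{j,j+1}(\kappa,h)\ (1\le j\le n-1),\qquad \hat T_n=K^{\mathrm{ra}}_n(\nu_n,g_n).$$ Then $T_j\mapsto \hat T_j$ ($0\le j\le n$) extends to an algebra homomorphism $\rho:H_n(1,1,1)\to\mathrm{End}(V^{\otimes n})$; i.e. the $\hat T_j$ satisfy all defining relations of $H_n(1,1,1)$.
   Context: Type $C$ affine Hecke algebra $H_n(t,t_n,t_0)$: the algebra generated by $T_0,\dots,T_n$ with relations $(T_0-t_0)(T_0+t_0^{-1})=0$; $(T_j-t)(T_j+t^{-1})=0$ for $1\le j\le n-1$; $(T_n-t_n)(T_n+t_n^{-1})=0$; $T_0T_1T_0T_1=T_1T_0T_1T_0$; $T_jT_{j+1}T_j=T_{j+1}T_jT_{j+1}$ for $1\le j\le n-2$; $T_{n-1}T_nT_{n-1}T_n=T_nT_{n-1}T_nT_{n-1}$; $T_jT_k=T_kT_j$ for $|j-k|\ge2$. For $H_n(1,1,1)$ all quadratic relations read $T_j^2=1$. Matrix elements: for $A\in\mathrm{End}(V)$, $Ae_j=\sum_k e_k[A]_j^k$; for $R\in\mathrm{End}(V\otimes V)$, $R(e_i\otimes e_j)=\sum_{k,l}[R]_{ij}^{kl}e_k\otimes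 e_l$. $P$ is the flip $P(x\otimes y)=y\otimes x$, and $\check R=RP$. For $A\in\mathrm{End}(V)$, $A_j\in\mathrm{End}(V^{\otimes n})$ acts as $A$ on the $j$-th factor and as identity elsewhere; similarly $\check R_{j,j+1}$ acts as $\check R$ on factors $j,j+1$. Binomial convention: $\binom{a}{b}=0$ unless $0\le b\le a$; $0^0=1$. Define $\epsilon(i,m,k)=1$ if $i\le k<m$, $-1$ if $m\le k<i$, $0$ otherwise. Jordanian $R$-matrix ($i,j,k,l\in\{0,\dots,N-1\}$, sum over integers $m$): $$[R^{\mathrm{ra}}(\kappa,h)]_{ij}^{kl}=(-1)^{j-l}h^{i+j-k-l}\Big\{\binom{i}{k}\binom{j}{l}-\frac{\kappa}{h}\sum_m(-1)^{m-k}\binom{i}{m}\binom{j+m-k-1}{l}\epsilon(j,m,k)\Big\}.$$ $K$-matrix ($j,k\in\{0,\dots,N-1\}$): $$[K^{\mathrm{ra}}(\nu,g)]_j^k=(-1)^j\binom{j}{k}g^{j-k}+2\nu\sum_{0\le l<j}(-1)^{j-l}\binom{j-l-1}{k-l}g^{j-k-1}.$$ *)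

theory Defs
  imports Complex_Main
begin

definition ibinom :: "int \<Rightarrow> int \<Rightarrow> int" where
  "ibinom a b = (if 0 \<le> b \<and> b \<le> a then int (nat a choose nat b) else 0)"

definition eps :: "int \<Rightarrow> int \<Rightarrow> int \<Rightarrow> int" where
  "eps i m k = (if i \<le> k \<and> k < m then 1 else if m \<le> k \<and> k < i then -1 else 0)"

text \<open>Matrix entry [R^ra(kappa,h)]_{ij}^{kl}. The sum over all integers m is written
  over the range 0..i, outside of which binom(i,m) vanishes.\<close>
definition Rra :: "complex \<Rightarrow> complex \<Rightarrow> nat \<Rightarrow> nat \<Rightarrow> nat \<Rightarrow> nat \<Rightarrow> complex" where
  "Rra \<kappa> h i j k l =
     (-1) powi (int j - int l) * h powi (int i + int j - int k - int l) *
     (of_int (ibinom (int i) (int k) * ibinom (int j) (int l))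
      - \<kappa> / h * (\<Sum>m\<in>{0..int i}. (-1) powi (m - int k) *
           of_int (ibinom (int i) m * ibinom (int j + m - int k - 1) (int l)
                   * eps (int j) m (int k))))"

text \<open>[Rcheck]_{ij}^{kl} = [R]_{ji}^{kl}, since Rcheck = R P.\<close>
definition Rcra :: "complex \<Rightarrow> complex \<Rightarrow> nat \<Rightarrow> nat \<Rightarrow> nat \<Rightarrow> nat \<Rightarrow> complex" where
  "Rcra \<kappa> h i j k l = Rra \<kappa> h j i k l"

definition Kra :: "complex \<Rightarrow> complex \<Rightarrow> nat \<Rightarrow> nat \<Rightarrow> complex" where
  "Kra \<nu> g j k =
     (-1) ^ j * of_int (ibinom (int j) (int k)) * g powi (int j - int k)
     + 2 * \<nu> * (\<Sum>l\<in>{0..<j}. (-1) ^ (j - l) *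
           of_int (ibinom (int j - int l - 1) (int k - int l)) * g powi (int j - int k - 1))"

text \<open>Basis of V^{\<otimes>n}: multi-indices (lists of length n with entries < N);
  list position p (0-based) is tensor factor p+1. An operator is given by its
  matrix M out in, i.e. M r c is the coefficient of e_r in the image of e_c.\<close>
definition mindex :: "nat \<Rightarrow> nat \<Rightarrow> nat list set" where
  "mindex N n = {xs. length xs = n \<and> (\<forall>x\<in>set xs. x < N)}"

type_synonym op = "nat list \<Rightarrow> nat list \<Rightarrow> complex"

definition opmul :: "nat \<Rightarrow> nat \<Rightarrow> op \<Rightarrow> op \<Rightarrow> op" where
  "opmul N n A B = (\<lambda>r c. \<Sum>y\<in>mindex N n. A r y * B y c)"

definition opid :: op where
  "opid = (\<lambda>r c. if r = c then 1 else 0)"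

definition opeq :: "nat \<Rightarrow> nat \<Rightarrow> op \<Rightarrow> op \<Rightarrow> bool" where
  "opeq N n A B = (\<forall>r\<in>mindex N n. \<forall>c\<in>mindex N n. A r c = B r c)"

text \<open>A acting on list position p (factor p+1): entry [A]_{c_p}^{r_p} if r, c agree elsewhere.\<close>
definition site1 :: "nat \<Rightarrow> (nat \<Rightarrow> nat \<Rightarrow> complex) \<Rightarrow> nat \<Rightarrow> op" where
  "site1 n A p = (\<lambda>r c. if \<forall>q<n. q \<noteq> p \<longrightarrow> r ! q = c ! q then A (c ! p) (r ! p) else 0)"

definition site2 :: "nat \<Rightarrow> (nat \<Rightarrow> nat \<Rightarrow> nat \<Rightarrow> nat \<Rightarrow> complex) \<Rightarrow> nat \<Rightarrow> op" where
  "site2 n Rc p = (\<lambda>r c. if \<forall>q<n. q \<noteq> p \<and> q \<noteq> p + 1 \<longrightarrow> r ! q = c ! q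
                        then Rc (c ! p) (c ! (p+1)) (r ! p) (r ! (p+1)) else 0)"

definition hatT :: "nat \<Rightarrow> complex \<Rightarrow> complex \<Rightarrow> complex \<Rightarrow> complex \<Rightarrow> complex \<Rightarrow> complex
                     \<Rightarrow> nat \<Rightarrow> op" where
  "hatT n \<kappa> h \<nu>0 g0 \<nu>n gn j =
     (if j = 0 then site1 n (Kra \<nu>0 g0) 0
      else if j = n then site1 n (Kra \<nu>n gn) (n - 1)
      else site2 n (Rcra \<kappa> h) (j - 1))"

end

theory Submission
  imports Defs "HOL-Analysis.Continuum_Not_Denumerable" "HOL-Computational_Algebra.Polynomial"
begin


definition Kc :: "complex \<Rightarrow> (complex \<Rightarrow> complex \<Rightarrow> complex) \<Rightarrow> complex \<Rightarrow> complex \<Rightarrow> complex" where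
 "Kc \<nu> F u v = F (-u) v - 2*\<nu>*(F u v - F (-u) v)/(2*u)"
definition Kc2 :: "complex \<Rightarrow> (complex \<Rightarrow> complex \<Rightarrow> complex) \<Rightarrow> complex \<Rightarrow> complex \<Rightarrow> complex" where
 "Kc2 \<nu> F u v = F u (-v) - 2*\<nu>*(F u v - F u (-v))/(2*v)"
definition Rc :: "complex \<Rightarrow> (complex \<Rightarrow> complex \<Rightarrow> complex) \<Rightarrow> complex \<Rightarrow> complex \<Rightarrow> complex" where
 "Rc \<kappa> F u v = F v u - \<kappa>*(F u v - F v u)/(u-v)"
definition R1 :: "complex \<Rightarrow> (complex \<Rightarrow> complex \<Rightarrow> complex \<Rightarrow> complex) \<Rightarrow> complex \<Rightarrow> complex \<Rightarrow> complex \<Rightarrow> complex" where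
 "R1 \<kappa> F u v w = F v u w - \<kappa>*(F u v w - F v u w)/(u-v)"
definition R2 :: "complex \<Rightarrow> (complex \<Rightarrow> complex \<Rightarrow> complex \<Rightarrow> complex) \<Rightarrow> complex \<Rightarrow> complex \<Rightarrow> complex \<Rightarrow> complex" where
 "R2 \<kappa> F u v w = F u w v - \<kappa>*(F u v w - F u w v)/(v-w)"

lemma dneg: "a = - b \<Longrightarrow> (c::complex) / a = - (c / b)" by simp
lemma dpos: "a = b \<Longrightarrow> (c::complex) / a = c / b" by simp

lemma Kc_sq:
  assumes "u \<noteq> 0"
  shows "Kc \<nu> (Kc \<nu> F) u v = F u v"
  using assms unfolding Kc_def minus_minus by (simp add: divide_simps) (simp add: algebra_simps)

lemma Kc2_sq:
  assumes "v \<noteq> 0"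
  shows "Kc2 \<nu> (Kc2 \<nu> F) u v = F u v"
  using assms unfolding Kc2_def minus_minus by (simp add: divide_simps) (simp add: algebra_simps)

lemma Rc_sq:
  assumes "u \<noteq> v"
  shows "Rc \<kappa> (Rc \<kappa> F) u v = F u v"
proof -
  have "v - u \<noteq> 0" "u - v \<noteq> 0" using assms by auto
  then show ?thesis unfolding Rc_def by (simp add: divide_simps) (simp add: algebra_simps)
qed

lemma leftrefl:
  assumes "u \<noteq> 0" "v \<noteq> 0" "u \<noteq> v" "u \<noteq> -v"
  shows "Kc \<nu> (Rc \<kappa> (Kc \<nu> (Rc \<kappa> F))) u v = Rc \<kappa> (Kc \<nu> (Rc \<kappa> (Kc \<nu> F))) u v"
proof -
  have uv: "u + v \<noteq> 0" using assms(4) eq_neg_iff_add_eq_0 by blast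
  have b: "-v - (-u) \<noteq> 0" "v - (-u) \<noteq> 0" "-u - v \<noteq> 0" "-v - u \<noteq> 0" "v - u \<noteq> 0" "u - (-v) \<noteq> 0" "-u - (-v) \<noteq> 0"
     "-u \<noteq> 0" "-v \<noteq> 0" "u - v \<noteq> 0" "u + v \<noteq> 0" "v + u \<noteq> 0"
    using assms uv by (auto simp: algebra_simps)
  have dm: "\<And>c. c / (- u - v) = - (c / (u + v))" "\<And>c. c/(v+u) = c/(u+v)" "\<And>c. c/(v - u) = - (c/(u-v))"
    "\<And>c. c / (- u) = - (c / u)" "\<And>c. c / (- v) = - (c / v)" "\<And>c. c / (- v - - u) = c / (u - v)" "\<And>c. c / (- v - u) = - (c/(u+v))" "\<And>c. c / (u - - v) = c/(u+v)" "\<And>c. c / (v - - u) = c/(u+v)"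
    "\<And>c. c / (- u - - v) = - (c/(u-v))" "\<And>c. c/ (2 * (- u)) = - (c / (2*u))" "\<And>c. c/ (2 * (- v)) = - (c / (2*v))"
    by ((rule dneg, simp add: algebra_simps) | (rule dpos, simp add: algebra_simps))+
  show ?thesis unfolding Kc_def Rc_def minus_minus
    apply (simp only: dm)
    using b assms apply (simp add: divide_simps)
    by (simp add: algebra_simps)
qed

lemma rightrefl:
  assumes "u \<noteq> 0" "v \<noteq> 0" "u \<noteq> v" "u \<noteq> -v"
  shows "Rc \<kappa> (Kc2 \<nu> (Rc \<kappa> (Kc2 \<nu> F))) u v = Kc2 \<nu> (Rc \<kappa> (Kc2 \<nu> (Rc \<kappa> F))) u v"
proof -
  have uv: "u + v \<noteq> 0" using assms(4) eq_neg_iff_add_eq_0 by blast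
  have b: "-v - (-u) \<noteq> 0" "v - (-u) \<noteq> 0" "-u - v \<noteq> 0" "-v - u \<noteq> 0" "v - u \<noteq> 0" "u - (-v) \<noteq> 0" "-u - (-v) \<noteq> 0"
     "-u \<noteq> 0" "-v \<noteq> 0" "u - v \<noteq> 0" "u + v \<noteq> 0" "v + u \<noteq> 0"
    using assms uv by (auto simp: algebra_simps)
  have dm: "\<And>c. c / (- u - v) = - (c / (u + v))" "\<And>c. c/(v+u) = c/(u+v)" "\<And>c. c/(v - u) = - (c/(u-v))"
    "\<And>c. c / (- u) = - (c / u)" "\<And>c. c / (- v) = - (c / v)" "\<And>c. c / (- v - - u) = c / (u - v)" "\<And>c. c / (- v - u) = - (c/(u+v))" "\<And>c. c / (u - - v) = c/(u+v)" "\<And>c. c / (v - - u) = c/(u+v)"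
    "\<And>c. c / (- u - - v) = - (c/(u-v))" "\<And>c. c/ (2 * (- u)) = - (c / (2*u))" "\<And>c. c/ (2 * (- v)) = - (c / (2*v))"
    by ((rule dneg, simp add: algebra_simps) | (rule dpos, simp add: algebra_simps))+
  show ?thesis unfolding Kc2_def Rc_def minus_minus
    apply (simp only: dm)
    using b assms apply (simp add: divide_simps)
    by (simp add: algebra_simps)
qed

lemma braid:
  assumes "u \<noteq> v" "v \<noteq> w" "u \<noteq> w"
  shows "R1 \<kappa> (R2 \<kappa> (R1 \<kappa> F)) u v w = R2 \<kappa> (R1 \<kappa> (R2 \<kappa> F)) u v w"
proof -
  have b: "u - v \<noteq> 0" "v - w \<noteq> 0" "u - w \<noteq> 0" using assms by auto
  have dm: "\<And>c. c/(v - u) = - (c/(u-v))" "\<And>c. c/(w - v) = - (c/(v-w))" "\<And>c. c/(w - u) = - (c/(u-w))"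
    by ((rule dneg, simp add: algebra_simps) | (rule dpos, simp add: algebra_simps))+
  show ?thesis unfolding R1_def R2_def
    apply (simp only: dm)
    using b apply (simp add: divide_simps)
    by (simp add: algebra_simps)
qed



lemma sum_if_le:
  fixes f :: "nat \<Rightarrow> 'a::comm_monoid_add"
  assumes "j < N"
  shows "(\<Sum>k<N. if k \<le> j then f k else 0) = (\<Sum>k\<le>j. f k)"
proof -
  have "(\<Sum>k<N. if k \<le> j then f k else 0) = sum f {k\<in>{..<N}. k \<le> j}"
    using sum.inter_filter[of "{..<N}" f "\<lambda>k. k \<le> j"] by simp
  also have "{k\<in>{..<N}. k \<le> j} = {..j}" using assms by auto
  finally show ?thesis .
qed

lemma Kra_nat:
  "Kra \<nu> g j k = (if k \<le> j then (-1)^j * of_nat (j choose k) * g^(j-k) else 0)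
     + 2*\<nu>*(\<Sum>l<j. if l \<le> k \<and> k < j then (-1)^(j-l) * of_nat ((j-l-1) choose (k-l)) * g^(j-k-1) else 0)"
proof -
  have a: "(-1)^j * of_int (ibinom (int j) (int k)) * g powi (int j - int k)
       = (if k \<le> j then (-1)^j * of_nat (j choose k) * g^(j-k) else (0::complex))"
  proof (cases "k \<le> j")
    case True
    then have e: "int j - int k = int (j - k)" by auto
    show ?thesis using True unfolding ibinom_def e power_int_of_nat by simp
  next
    case False
    then show ?thesis unfolding ibinom_def by simp
  qed
  have b: "(-1) ^ (j - l) * of_int (ibinom (int j - int l - 1) (int k - int l)) * g powi (int j - int k - 1)
       = (if l \<le> k \<and> k < j then (-1)^(j-l) * of_nat ((j-l-1) choose (k-l)) * g^(j-k-1) else (0::complex))"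
    if "l < j" for l
  proof (cases "l \<le> k \<and> k < j")
    case True
    then have e1: "int j - int l - 1 = int (j-l-1)" "int k - int l = int (k - l)" "int j - int k - 1 = int (j-k-1)"
      using that by auto
    have i1: "ibinom (int j - int l - 1) (int k - int l) = int ((j-l-1) choose (k-l))"
      unfolding e1(1,2) ibinom_def nat_int using True that by simp
    have i2: "g powi (int j - int k - 1) = g^(j-k-1)"
      unfolding e1(3) power_int_of_nat ..
    show ?thesis using True unfolding i1 i2 by simp
  next
    case False
    then show ?thesis using that by (auto simp: ibinom_def)
  qed
  have c: "(\<Sum>l\<in>{0..<j}. (-1) ^ (j - l) * of_int (ibinom (int j - int l - 1) (int k - int l)) * g powi (int j - int k - 1))
     = (\<Sum>l<j. if l \<le> k \<and> k < j then (-1)^(j-l) * of_nat ((j-l-1) choose (k-l)) * g^(j-k-1) else (0::complex))"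
    unfolding atLeast0LessThan by (rule sum.cong[OF refl b]) simp
  show ?thesis unfolding Kra_def a c ..
qed

lemma sum_if_ivl:
  fixes f :: "nat \<Rightarrow> 'a::comm_monoid_add"
  assumes "j \<le> N"
  shows "(\<Sum>k<N. if l \<le> k \<and> k < j then f k else 0) = (\<Sum>t<j-l. f (t+l))"
proof -
  have "(\<Sum>k<N. if l \<le> k \<and> k < j then f k else 0) = sum f {k\<in>{..<N}. l \<le> k \<and> k < j}"
    using sum.inter_filter[of "{..<N}" f "\<lambda>k. l \<le> k \<and> k < j"] by simp
  also have "{k\<in>{..<N}. l \<le> k \<and> k < j} = {l..<j}" using assms by auto
  also have "sum f {l..<j} = (\<Sum>t<j-l. f (t+l))"
  proof (cases "l \<le> j")
    case True
    then have "{l..<j} = {0+l..<(j-l)+l}" by simp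
    then show ?thesis using sum.shift_bounds_nat_ivl[of f 0 l "j-l"] by (simp add: atLeast0LessThan)
  next
    case False then show ?thesis by simp
  qed
  finally show ?thesis .
qed

lemma K_gen:
  fixes x g \<nu> :: complex
  assumes "j < N"
  shows "(\<Sum>k<N. Kra \<nu> g j k * x^k) = (-x-g)^j - 2*\<nu>*(\<Sum>l<j. x^l * (-x-g)^(j-1-l))"
proof -
  have A: "(\<Sum>k<N. (if k \<le> j then (-1)^j * of_nat (j choose k) * g^(j-k) else 0) * x^k) = (-x-g)^j"
  proof -
    have "(\<Sum>k<N. (if k \<le> j then (-1)^j * of_nat (j choose k) * g^(j-k) else 0) * x^k)
        = (\<Sum>k<N. if k \<le> j then (-1)^j * (of_nat (j choose k) * x^k * g^(j-k)) else 0)"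
      by (rule sum.cong) (auto simp: algebra_simps)
    also have "\<dots> = (\<Sum>k\<le>j. (-1)^j * (of_nat (j choose k) * x^k * g^(j-k)))"
      using assms by (rule sum_if_le)
    also have "\<dots> = (-1)^j * (x+g)^j" by (simp add: binomial_ring sum_distrib_left)
    also have "\<dots> = (-x-g)^j" by (simp add: power_mult_distrib[symmetric])
    finally show ?thesis .
  qed
  have B1: "(\<Sum>k<N. (if l \<le> k \<and> k < j then (-1)^(j-l) * of_nat ((j-l-1) choose (k-l)) * g^(j-k-1) else 0) * x^k)
      = - (x^l * (-x-g)^(j-1-l))" if l: "l < j" for l
  proof -
    have "(\<Sum>k<N. (if l \<le> k \<and> k < j then (-1)^(j-l) * of_nat ((j-l-1) choose (k-l)) * g^(j-k-1) else 0) * x^k)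
       = (\<Sum>k<N. if l \<le> k \<and> k < j then (-1)^(j-l) * of_nat ((j-l-1) choose (k-l)) * g^(j-k-1) * x^k else 0)"
      by (rule sum.cong) auto
    also have "\<dots> = (\<Sum>t<j-l. (-1)^(j-l) * of_nat ((j-l-1) choose (t+l-l)) * g^(j-(t+l)-1) * x^(t+l))"
      using assms by (intro sum_if_ivl) simp
    also have "\<dots> = (\<Sum>t\<le>j-l-1. (-1)^(j-l) * x^l * (of_nat ((j-l-1) choose t) * x^t * g^(j-l-1-t)))"
    proof -
      have "{..<j-l} = {..j-l-1}" using l by auto
      then show ?thesis by (intro sum.cong) (auto simp: power_add algebra_simps)
    qed
    also have "\<dots> = (-1)^(j-l) * x^l * (x+g)^(j-l-1)"
      by (simp add: binomial_ring sum_distrib_left)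
    also have "\<dots> = - (x^l * (-x-g)^(j-1-l))"
    proof -
      have "j - l = Suc (j-1-l)" using l by auto
      then show ?thesis by (simp add: power_mult_distrib[symmetric])
    qed
    finally show ?thesis .
  qed
  have B: "(\<Sum>k<N. (\<Sum>l<j. if l \<le> k \<and> k < j then (-1)^(j-l) * of_nat ((j-l-1) choose (k-l)) * g^(j-k-1) else 0) * x^k)
      = - (\<Sum>l<j. x^l * (-x-g)^(j-1-l))"
  proof -
    have "(\<Sum>k<N. (\<Sum>l<j. if l \<le> k \<and> k < j then (-1)^(j-l) * of_nat ((j-l-1) choose (k-l)) * g^(j-k-1) else 0) * x^k)
      = (\<Sum>k<N. \<Sum>l<j. (if l \<le> k \<and> k < j then (-1)^(j-l) * of_nat ((j-l-1) choose (k-l)) * g^(j-k-1) else 0) * x^k)"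
      by (simp add: sum_distrib_right)
    also have "\<dots> = (\<Sum>l<j. \<Sum>k<N. (if l \<le> k \<and> k < j then (-1)^(j-l) * of_nat ((j-l-1) choose (k-l)) * g^(j-k-1) else 0) * x^k)"
      by (rule sum.swap)
    also have "\<dots> = (\<Sum>l<j. - (x^l * (-x-g)^(j-1-l)))"
      by (rule sum.cong[OF refl]) (simp add: B1)
    finally show ?thesis by (simp add: sum_negf)
  qed
  show ?thesis
    unfolding Kra_nat by (simp add: distrib_right sum.distrib A B sum_distrib_left[symmetric] mult.assoc)
qed

lemma K_val:
  fixes x g \<nu> :: complex
  assumes "j < N" "2*x+g \<noteq> 0"
  shows "(\<Sum>k<N. Kra \<nu> g j k * x^k) = (-x-g)^j - 2*\<nu>*(x^j - (-x-g)^j)/(2*x+g)"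
proof -
  have "x^j - (-x-g)^j = (2*x+g) * (\<Sum>l<j. x^l * (-x-g)^(j-1-l))"
    using power_diff_sumr2[of x j "-x-g"] by (simp add: mult.commute)
  then have "(\<Sum>l<j. x^l * (-x-g)^(j-1-l)) = (x^j - (-x-g)^j)/(2*x+g)"
    using assms(2) by (simp add: field_simps)
  then show ?thesis using K_gen[OF assms(1)] by simp
qed

lemma sum_int_atMost:
  fixes f :: "int \<Rightarrow> 'a::comm_monoid_add"
  shows "(\<Sum>m\<in>{0..int j}. f m) = (\<Sum>m\<le>j. f (int m))"
proof -
  have "{0..int j} = int ` {0..j}" by (simp add: image_int_atLeastAtMost)
  then show ?thesis by (simp add: sum.reindex atLeast0AtMost)
qed

lemma Rcra_P:
  fixes h :: complex
  shows "(-1) powi (int i - int l) * h powi (int j + int i - int k - int l) * of_int (ibinom (int j) (int k) * ibinom (int i) (int l))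
    = (if k \<le> j \<and> l \<le> i then (of_nat (j choose k) * h^(j-k)) * (of_nat (i choose l) * (-h)^(i-l)) else 0)"
proof (cases "k \<le> j \<and> l \<le> i")
  case True
  then have e: "int i - int l = int (i - l)" "int j + int i - int k - int l = int ((j-k) + (i-l))" by auto
  have i: "ibinom (int j) (int k) = int (j choose k)" "ibinom (int i) (int l) = int (i choose l)"
    unfolding ibinom_def using True by auto
  show ?thesis unfolding e i power_int_of_nat power_add using True
    by (simp add: power_mult_distrib[of "-1" h, simplified] algebra_simps)
next
  case False
  then have z: "ibinom (int j) (int k) * ibinom (int i) (int l) = 0" unfolding ibinom_def by auto
  show ?thesis unfolding z if_not_P[OF False] by simp
qed

lemma Rcra_Q:
  fixes h :: complex
  assumes h: "h \<noteq> 0"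
  shows "(-1) powi (int i - int l) * h powi (int j + int i - int k - int l) * ((-1) powi (int m - int k) * of_int (ibinom (int j) (int m) * ibinom (int i + int m - int k - 1) (int l) * eps (int i) (int m) (int k)))
   = (if m \<le> j \<and> (i \<le> k \<and> k < m \<or> m \<le> k \<and> k < i) \<and> l \<le> i+m-k-1
      then (if i \<le> k then 1 else -1) * of_nat (j choose m) * of_nat ((i+m-k-1) choose l) * (-(h * h^(j-m) * (-h)^(i+m-k-1-l))) else 0)"
proof (cases "m \<le> j \<and> (i \<le> k \<and> k < m \<or> m \<le> k \<and> k < i) \<and> l \<le> i+m-k-1")
  case True
  define a where "a = i+m-k-1"
  have ak: "i + m \<ge> k + 1" "l \<le> a" using True unfolding a_def by auto
  have e1: "int j + int i - int k - int l = int ((j-m) + 1 + (a-l))" using True ak unfolding a_def by auto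
  have e2: "int i - int l + (int m - int k) = int ((a-l) + 1)" using True ak unfolding a_def by auto
  have e3: "int i + int m - int k - 1 = int a" using ak unfolding a_def by auto
  have s: "(-1) powi (int i - int l) * (-1) powi (int m - int k) = ((-1::complex) ^ ((a-l)+1))"
    using power_int_add[of "-1::complex" "int i - int l" "int m - int k"] unfolding e2 power_int_of_nat by simp
  have i: "ibinom (int j) (int m) = int (j choose m)" "ibinom (int a) (int l) = int (a choose l)"
    unfolding ibinom_def using True ak by auto
  have ep: "eps (int i) (int m) (int k) = (if i \<le> k then 1 else -1)" unfolding eps_def using True by auto
  have "(-1) powi (int i - int l) * h powi (int j + int i - int k - int l) * ((-1) powi (int m - int k) * of_int (ibinom (int j) (int m) * ibinom (int i + int m - int k - 1) (int l) * eps (int i) (int m) (int k)))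
     = ((-1) powi (int i - int l) * (-1) powi (int m - int k)) * h powi (int j + int i - int k - int l) * of_int (ibinom (int j) (int m) * ibinom (int a) (int l) * eps (int i) (int m) (int k))"
    unfolding e3 by (simp add: algebra_simps)
  also have "\<dots> = (-1) ^ ((a-l)+1) * h ^ ((j-m) + 1 + (a-l)) * (of_nat (j choose m) * of_nat (a choose l) * (if i \<le> k then 1 else -1))"
    unfolding s e1 power_int_of_nat i ep by simp
  also have "\<dots> = (if i \<le> k then 1 else -1) * of_nat (j choose m) * of_nat (a choose l) * (-(h * h^(j-m) * (-h)^(a-l)))"
    by (simp add: power_add power_mult_distrib[of "-1" h, simplified] algebra_simps)
  finally show ?thesis using True unfolding a_def by simp
next
  case False
  have z: "ibinom (int j) (int m) * ibinom (int i + int m - int k - 1) (int l) * eps (int i) (int m) (int k) = 0"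
  proof (cases "m \<le> j \<and> (i \<le> k \<and> k < m \<or> m \<le> k \<and> k < i)")
    case True
    then have "\<not> l \<le> i+m-k-1" using False by auto
    moreover have "int i + int m - int k - 1 = int (i+m-k-1)" using True by auto
    ultimately have "ibinom (int i + int m - int k - 1) (int l) = 0" unfolding ibinom_def by auto
    then show ?thesis by simp
  next
    case F: False
    show ?thesis
    proof (cases "m \<le> j")
      case True
      then have "eps (int i) (int m) (int k) = 0" using F unfolding eps_def by auto
      then show ?thesis by simp
    next
      case False
      then have "ibinom (int j) (int m) = 0" unfolding ibinom_def by auto
      then show ?thesis by simp
    qed
  qed
  show ?thesis unfolding z if_not_P[OF False] by simp
qed

definition regm :: "nat \<Rightarrow> nat \<Rightarrow> nat \<Rightarrow> bool" where
  "regm i m k = (i \<le> k \<and> k < m \<or> m \<le> k \<and> k < i)"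

definition QQ :: "complex \<Rightarrow> nat \<Rightarrow> nat \<Rightarrow> nat \<Rightarrow> nat \<Rightarrow> nat \<Rightarrow> complex" where
  "QQ h i j m k l = (if m \<le> j \<and> regm i m k \<and> l \<le> i+m-k-1
      then (if i \<le> k then 1 else -1) * of_nat (j choose m) * of_nat ((i+m-k-1) choose l) * (-(h * h^(j-m) * (-h)^(i+m-k-1-l))) else 0)"

definition PP :: "complex \<Rightarrow> nat \<Rightarrow> nat \<Rightarrow> nat \<Rightarrow> nat \<Rightarrow> complex" where
  "PP h i j k l = (if k \<le> j \<and> l \<le> i then (of_nat (j choose k) * h^(j-k)) * (of_nat (i choose l) * (-h)^(i-l)) else 0)"

lemma Rcra_nat:
  assumes h: "h \<noteq> 0"
  shows "Rcra \<kappa> h i j k l = PP h i j k l - \<kappa>/h * (\<Sum>m\<le>j. QQ h i j m k l)"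
proof -
  have "Rcra \<kappa> h i j k l = (-1) powi (int i - int l) * h powi (int j + int i - int k - int l) * of_int (ibinom (int j) (int k) * ibinom (int i) (int l))
     - \<kappa>/h * (\<Sum>m\<in>{0..int j}. (-1) powi (int i - int l) * h powi (int j + int i - int k - int l) * ((-1) powi (m - int k) * of_int (ibinom (int j) m * ibinom (int i + m - int k - 1) (int l) * eps (int i) m (int k))))"
    unfolding Rcra_def Rra_def by (simp add: sum_distrib_left algebra_simps)
  also have "\<dots> = PP h i j k l - \<kappa>/h * (\<Sum>m\<le>j. QQ h i j m k l)"
    unfolding sum_int_atMost Rcra_P Rcra_Q[OF h] PP_def QQ_def regm_def by simp
  finally show ?thesis .
qed

lemma RP_gen:
  fixes x y h :: complex
  assumes "i < N" "j < N"
  shows "(\<Sum>k<N. \<Sum>l<N. PP h i j k l * x^k * y^l) = (x+h)^j * (y-h)^i"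
proof -
  have "(\<Sum>k<N. \<Sum>l<N. PP h i j k l * x^k * y^l)
      = (\<Sum>k<N. \<Sum>l<N. (if k \<le> j then of_nat (j choose k) * x^k * h^(j-k) else 0) * (if l \<le> i then of_nat (i choose l) * y^l * (-h)^(i-l) else 0))"
    unfolding PP_def by (intro sum.cong refl) (auto simp: algebra_simps)
  also have "\<dots> = (\<Sum>k<N. if k \<le> j then of_nat (j choose k) * x^k * h^(j-k) else 0) * (\<Sum>l<N. if l \<le> i then of_nat (i choose l) * y^l * (-h)^(i-l) else 0)"
    by (simp add: sum_product)
  also have "\<dots> = (x+h)^j * (y + (-h))^i"
    unfolding sum_if_le[OF assms(2)] sum_if_le[OF assms(1)] binomial_ring ..
  finally show ?thesis by simp
qed

lemma RQ_l:
  fixes y h :: complex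
  assumes "i < N" "j < N" "m \<le> j"
  shows "(\<Sum>l<N. QQ h i j m k l * y^l) = (if regm i m k then -(h * h^(j-m) * of_nat (j choose m)) * (if i \<le> k then 1 else -1) * (y-h)^(i+m-k-1) else 0)"
proof (cases "regm i m k")
  case True
  have aN: "i+m-k-1 < N" using True assms unfolding regm_def by auto
  have "(\<Sum>l<N. QQ h i j m k l * y^l) = (\<Sum>l<N. if l \<le> i+m-k-1 then (-(h * h^(j-m) * of_nat (j choose m)) * (if i \<le> k then 1 else -1)) * (of_nat ((i+m-k-1) choose l) * y^l * (-h)^(i+m-k-1-l)) else 0)"
    unfolding QQ_def using True assms(3) by (intro sum.cong refl) (auto simp: algebra_simps)
  also have "\<dots> = (-(h * h^(j-m) * of_nat (j choose m)) * (if i \<le> k then 1 else -1)) * (y + (-h))^(i+m-k-1)"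
    unfolding sum_if_le[OF aN] binomial_ring by (simp add: sum_distrib_left)
  finally show ?thesis using True by simp
next
  case False
  then show ?thesis unfolding QQ_def by simp
qed

lemma S_geom:
  fixes x Y :: complex
  assumes "i < N" "m < N"
  shows "(x - Y) * (\<Sum>k<N. if regm i m k then (if i \<le> k then 1 else -1) * (x^k * Y^(i+m-k-1)) else 0) = x^m * Y^i - x^i * Y^m"
proof (cases "i \<le> m")
  case True
  have "(\<Sum>k<N. if regm i m k then (if i \<le> k then 1 else -1) * (x^k * Y^(i+m-k-1)) else 0)
     = (\<Sum>k<N. if i \<le> k \<and> k < m then x^k * Y^(i+m-k-1) else 0)"
    using True unfolding regm_def by (intro sum.cong refl) auto
  also have "\<dots> = (\<Sum>t<m-i. x^(t+i) * Y^(i+m-(t+i)-1))"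
    using assms by (intro sum_if_ivl) simp
  also have "\<dots> = x^i * Y^i * (\<Sum>t<m-i. Y^(m-i - Suc t) * x^t)"
    unfolding sum_distrib_left
  proof (intro sum.cong refl)
    fix t assume "t \<in> {..<m-i}"
    then have "i+m-(t+i)-1 = i + (m-i - Suc t)" using True by auto
    then show "x^(t+i) * Y^(i+m-(t+i)-1) = x^i * Y^i * (Y^(m-i - Suc t) * x^t)"
      by (simp add: power_add algebra_simps)
  qed
  finally have e: "(\<Sum>k<N. if regm i m k then (if i \<le> k then 1 else -1) * (x^k * Y^(i+m-k-1)) else 0) = x^i * Y^i * (\<Sum>t<m-i. Y^(m-i - Suc t) * x^t)" .
  have s1: "(x - Y) * (\<Sum>t<m-i. Y^(m-i - Suc t) * x^t) = x^(m-i) - Y^(m-i)"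
    using power_diff_sumr2[of x "m-i" Y] by simp
  have pw: "x^m = x^i * x^(m-i)" "Y^m = Y^i * Y^(m-i)" using True by (simp_all add: power_add[symmetric])
  have "(x - Y) * (x^i * Y^i * (\<Sum>t<m-i. Y^(m-i - Suc t) * x^t)) = x^i * Y^i * ((x - Y) * (\<Sum>t<m-i. Y^(m-i - Suc t) * x^t))"
    by (simp only: mult_ac)
  also have "\<dots> = x^i * Y^i * (x^(m-i) - Y^(m-i))" by (simp only: s1)
  also have "\<dots> = x^m * Y^i - x^i * Y^m" unfolding pw by (simp add: algebra_simps)
  finally show ?thesis unfolding e .
next
  case False
  have "(\<Sum>k<N. if regm i m k then (if i \<le> k then 1 else -1) * (x^k * Y^(i+m-k-1)) else 0)
     = - (\<Sum>k<N. if m \<le> k \<and> k < i then x^k * Y^(i+m-k-1) else 0)"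
    using False unfolding regm_def sum_negf[symmetric] by (intro sum.cong refl) auto
  also have "(\<Sum>k<N. if m \<le> k \<and> k < i then x^k * Y^(i+m-k-1) else 0) = (\<Sum>t<i-m. x^(t+m) * Y^(i+m-(t+m)-1))"
    using assms by (intro sum_if_ivl) simp
  also have "\<dots> = x^m * Y^m * (\<Sum>t<i-m. Y^(i-m - Suc t) * x^t)"
    unfolding sum_distrib_left
  proof (intro sum.cong refl)
    fix t assume "t \<in> {..<i-m}"
    then have "i+m-(t+m)-1 = m + (i-m - Suc t)" using False by auto
    then show "x^(t+m) * Y^(i+m-(t+m)-1) = x^m * Y^m * (Y^(i-m - Suc t) * x^t)"
      by (simp add: power_add algebra_simps)
  qed
  finally have e: "(\<Sum>k<N. if regm i m k then (if i \<le> k then 1 else -1) * (x^k * Y^(i+m-k-1)) else 0) = - (x^m * Y^m * (\<Sum>t<i-m. Y^(i-m - Suc t) * x^t))" .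
  have s1: "(x - Y) * (\<Sum>t<i-m. Y^(i-m - Suc t) * x^t) = x^(i-m) - Y^(i-m)"
    using power_diff_sumr2[of x "i-m" Y] by simp
  have pw: "x^i = x^m * x^(i-m)" "Y^i = Y^m * Y^(i-m)" using False by (simp_all add: power_add[symmetric])
  have "(x - Y) * (x^m * Y^m * (\<Sum>t<i-m. Y^(i-m - Suc t) * x^t)) = x^m * Y^m * ((x - Y) * (\<Sum>t<i-m. Y^(i-m - Suc t) * x^t))"
    by (simp only: mult_ac)
  also have "\<dots> = x^m * Y^m * (x^(i-m) - Y^(i-m))" by (simp only: s1)
  also have "\<dots> = x^i * Y^m - x^m * Y^i" unfolding pw by (simp add: algebra_simps)
  finally show ?thesis unfolding e by (simp add: algebra_simps)
qed

lemma R_gen: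
  fixes x y h \<kappa> :: complex
  assumes h: "h \<noteq> 0" and iN: "i < N" and jN: "j < N"
  shows "(\<Sum>k<N. \<Sum>l<N. Rcra \<kappa> h i j k l * x^k * y^l) = (x+h)^j * (y-h)^i
     + \<kappa> * (\<Sum>m\<le>j. h^(j-m) * of_nat (j choose m) * (\<Sum>k<N. if regm i m k then (if i \<le> k then 1 else -1) * (x^k * (y-h)^(i+m-k-1)) else 0))"
proof -
  have q: "(\<Sum>k<N. \<Sum>l<N. (\<Sum>m\<le>j. QQ h i j m k l) * x^k * y^l)
     = (\<Sum>m\<le>j. -(h * h^(j-m) * of_nat (j choose m)) * (\<Sum>k<N. if regm i m k then (if i \<le> k then 1 else -1) * (x^k * (y-h)^(i+m-k-1)) else 0))"
  proof -
    have "(\<Sum>k<N. \<Sum>l<N. (\<Sum>m\<le>j. QQ h i j m k l) * x^k * y^l) = (\<Sum>k<N. \<Sum>m\<le>j. x^k * (\<Sum>l<N. QQ h i j m k l * y^l))"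
      by (simp add: sum_distrib_right sum_distrib_left sum.swap[of _ "{..<N}" "{..j}"] algebra_simps)
    also have "\<dots> = (\<Sum>k<N. \<Sum>m\<le>j. x^k * (if regm i m k then -(h * h^(j-m) * of_nat (j choose m)) * (if i \<le> k then 1 else -1) * (y-h)^(i+m-k-1) else 0))"
      using iN jN by (intro sum.cong refl) (simp add: RQ_l)
    also have "\<dots> = (\<Sum>m\<le>j. \<Sum>k<N. -(h * h^(j-m) * of_nat (j choose m)) * (if regm i m k then (if i \<le> k then 1 else -1) * (x^k * (y-h)^(i+m-k-1)) else 0))"
      by (subst sum.swap) (intro sum.cong refl, simp add: algebra_simps)
    finally show ?thesis by (simp add: sum_distrib_left)
  qed
  have "(\<Sum>k<N. \<Sum>l<N. Rcra \<kappa> h i j k l * x^k * y^l) = (\<Sum>k<N. \<Sum>l<N. PP h i j k l * x^k * y^l)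
      - \<kappa>/h * (\<Sum>k<N. \<Sum>l<N. (\<Sum>m\<le>j. QQ h i j m k l) * x^k * y^l)"
    unfolding Rcra_nat[OF h] by (simp add: algebra_simps sum_subtractf sum_distrib_left)
  also have "\<dots> = (x+h)^j * (y-h)^i
     + \<kappa> * (\<Sum>m\<le>j. h^(j-m) * of_nat (j choose m) * (\<Sum>k<N. if regm i m k then (if i \<le> k then 1 else -1) * (x^k * (y-h)^(i+m-k-1)) else 0))"
    unfolding q RP_gen[OF iN jN] using h by (simp add: sum_distrib_left sum_negf algebra_simps)
  finally show ?thesis .
qed

lemma mult_helper: "(d::complex) * S = T \<Longrightarrow> d * (a * b * S) = a * b * T"
proof -
  assume e: "d * S = T"
  have "d * (a * b * S) = a * b * (d * S)" by (simp only: mult_ac)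
  then show ?thesis by (simp only: e)
qed

lemma fin_helper:
  fixes d W a b c k :: complex
  assumes "d \<noteq> 0" "d * W = a * b - c"
  shows "b * a + k * W = a * b - k * (c - a * b) / d"
proof -
  have w: "W = (a * b - c) / d" using assms by (simp add: field_simps)
  show ?thesis unfolding w using assms(1) by (simp add: field_simps)
qed

lemma R_val:
  fixes x y h \<kappa> :: complex
  assumes h: "h \<noteq> 0" and iN: "i < N" and jN: "j < N" and d: "x - y + h \<noteq> 0"
  shows "(\<Sum>k<N. \<Sum>l<N. Rcra \<kappa> h i j k l * x^k * y^l) = (y-h)^i * (x+h)^j - \<kappa>*(x^i*y^j - (y-h)^i*(x+h)^j)/(x-y+h)"
proof -
  define Y where "Y = y - h"
  have dd: "x - y + h = x - Y" unfolding Y_def by simp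
  have "(x - Y) * (\<Sum>m\<le>j. h^(j-m) * of_nat (j choose m) * (\<Sum>k<N. if regm i m k then (if i \<le> k then 1 else -1) * (x^k * Y^(i+m-k-1)) else 0))
     = (\<Sum>m\<le>j. h^(j-m) * of_nat (j choose m) * (x^m * Y^i - x^i * Y^m))"
    unfolding sum_distrib_left[of "x - Y"]
  proof (intro sum.cong refl)
    fix m assume "m \<in> {..j}"
    then have "m < N" using jN by auto
    show "(x - Y) * (h^(j-m) * of_nat (j choose m) * (\<Sum>k<N. if regm i m k then (if i \<le> k then 1 else -1) * (x^k * Y^(i+m-k-1)) else 0))
        = h^(j-m) * of_nat (j choose m) * (x^m * Y^i - x^i * Y^m)"
      using S_geom[OF iN \<open>m < N\<close>, of x Y] by (rule mult_helper)
  qed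
  also have "\<dots> = Y^i * (\<Sum>m\<le>j. of_nat (j choose m) * x^m * h^(j-m)) - x^i * (\<Sum>m\<le>j. of_nat (j choose m) * Y^m * h^(j-m))"
    by (simp add: sum_distrib_left sum_subtractf[symmetric] algebra_simps)
  also have "\<dots> = Y^i * (x+h)^j - x^i * (Y+h)^j"
    by (simp only: binomial_ring)
  finally have e: "(x - Y) * (\<Sum>m\<le>j. h^(j-m) * of_nat (j choose m) * (\<Sum>k<N. if regm i m k then (if i \<le> k then 1 else -1) * (x^k * Y^(i+m-k-1)) else 0))
       = Y^i * (x+h)^j - x^i * y^j" unfolding Y_def by simp
  have d': "x - Y \<noteq> 0" using d dd by simp
  show ?thesis unfolding R_gen[OF h iN jN] dd Y_def[symmetric]
    by (rule fin_helper[OF d' e])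
qed



lemma mindex_fin: "finite (mindex N n)"
proof -
  have "mindex N n \<subseteq> {xs. set xs \<subseteq> {..<N} \<and> length xs = n}" unfolding mindex_def by auto
  moreover have "finite {xs. set xs \<subseteq> {..<N} \<and> length xs = n}" by (rule finite_lists_length_eq) simp
  ultimately show ?thesis by (rule finite_subset)
qed

lemma mindex_upd: "y \<in> mindex N n \<Longrightarrow> a < N \<Longrightarrow> y[p:=a] \<in> mindex N n"
  unfolding mindex_def by (auto dest: set_update_subset_insert[THEN subsetD])

lemma site1_sum:
  fixes W :: "nat list \<Rightarrow> complex"
  assumes p: "p < n" and y: "y \<in> mindex N n"
  shows "(\<Sum>r\<in>mindex N n. site1 n A p r y * W r) = (\<Sum>a<N. A (y!p) a * W (y[p:=a]))"
proof -
  have ly: "length y = n" using y unfolding mindex_def by auto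
  define S where "S = {r\<in>mindex N n. \<forall>q<n. q \<noteq> p \<longrightarrow> r ! q = y ! q}"
  have inj: "inj_on (\<lambda>a. y[p:=a]) {..<N}"
      by (rule inj_onI) (metis ly p nth_list_update_eq)
  have "(\<Sum>r\<in>mindex N n. site1 n A p r y * W r) = (\<Sum>r\<in>mindex N n. if r \<in> S then A (y!p) (r!p) * W r else 0)"
    unfolding S_def site1_def by (intro sum.cong refl) auto
  also have "\<dots> = (\<Sum>r\<in>S. A (y!p) (r!p) * W r)"
    using mindex_fin[of N n] unfolding S_def by (simp add: sum.inter_filter)
  also have "S = (\<lambda>a. y[p:=a]) ` {..<N}"
  proof
    show "S \<subseteq> (\<lambda>a. y[p:=a]) ` {..<N}"
    proof
      fix r assume r: "r \<in> S"
      then have lr: "length r = n" and rN: "\<forall>x\<in>set r. x < N" and ag: "\<forall>q<n. q \<noteq> p \<longrightarrow> r ! q = y ! q"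
        unfolding S_def mindex_def by auto
      have "r = y[p := r!p]"
      proof (rule nth_equalityI)
        show "length r = length (y[p := r!p])" using lr ly by simp
        fix i assume "i < length r"
        then show "r ! i = y[p := r!p] ! i" using ag lr ly by (cases "i = p") (auto simp: nth_list_update)
      qed
      moreover have "r!p < N" using rN lr p by auto
      ultimately show "r \<in> (\<lambda>a. y[p:=a]) ` {..<N}" by auto
    qed
  next
    show "(\<lambda>a. y[p:=a]) ` {..<N} \<subseteq> S"
      using y unfolding S_def by (auto intro: mindex_upd simp: nth_list_update)
  qed
  also have "(\<Sum>r\<in>(\<lambda>a. y[p:=a]) ` {..<N}. A (y!p) (r!p) * W r) = (\<Sum>a<N. A (y!p) a * W (y[p:=a]))"
    using sum.reindex[OF inj, of "\<lambda>r. A (y!p) (r!p) * W r"] ly p by simp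
  finally show ?thesis .
qed

lemma site2_sum:
  fixes W :: "nat list \<Rightarrow> complex"
  assumes p: "Suc p < n" and y: "y \<in> mindex N n"
  shows "(\<Sum>r\<in>mindex N n. site2 n R p r y * W r) = (\<Sum>a<N. \<Sum>b<N. R (y!p) (y!Suc p) a b * W (y[p:=a, Suc p:=b]))"
proof -
  have ly: "length y = n" using y unfolding mindex_def by auto
  define S where "S = {r\<in>mindex N n. \<forall>q<n. q \<noteq> p \<and> q \<noteq> p + 1 \<longrightarrow> r ! q = y ! q}"
  have inj2: "inj_on (\<lambda>(a,b). y[p:=a, Suc p:=b]) ({..<N} \<times> {..<N})"
  proof (rule inj_onI, clarify)
      fix a b a' b' assume e: "y[p:=a, Suc p:=b] = y[p:=a', Suc p:=b']"
      have "y[p:=a, Suc p:=b] ! p = y[p:=a', Suc p:=b'] ! p" "y[p:=a, Suc p:=b] ! Suc p = y[p:=a', Suc p:=b'] ! Suc p"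
        using e by simp_all
      then show "a = a' \<and> b = b'" using ly p by (simp add: nth_list_update)
    qed
  have "(\<Sum>r\<in>mindex N n. site2 n R p r y * W r) = (\<Sum>r\<in>mindex N n. if r \<in> S then R (y!p) (y!Suc p) (r!p) (r!Suc p) * W r else 0)"
    unfolding S_def site2_def by (intro sum.cong refl) auto
  also have "\<dots> = (\<Sum>r\<in>S. R (y!p) (y!Suc p) (r!p) (r!Suc p) * W r)"
    using mindex_fin[of N n] unfolding S_def by (simp add: sum.inter_filter)
  also have "S = (\<lambda>(a,b). y[p:=a, Suc p:=b]) ` ({..<N} \<times> {..<N})"
  proof
    show "S \<subseteq> (\<lambda>(a,b). y[p:=a, Suc p:=b]) ` ({..<N} \<times> {..<N})"
    proof
      fix r assume r: "r \<in> S"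
      then have lr: "length r = n" and rN: "\<forall>x\<in>set r. x < N" and ag: "\<forall>q<n. q \<noteq> p \<and> q \<noteq> p + 1 \<longrightarrow> r ! q = y ! q"
        unfolding S_def mindex_def by auto
      have "r = y[p := r!p, Suc p := r!Suc p]"
      proof (rule nth_equalityI)
        show "length r = length (y[p := r!p, Suc p := r!Suc p])" using lr ly by simp
        fix i assume "i < length r"
        then show "r ! i = y[p := r!p, Suc p := r!Suc p] ! i" using ag lr ly by (cases "i = p"; cases "i = Suc p") (auto simp: nth_list_update)
      qed
      moreover have "r!p < N" "r!Suc p < N" using rN lr p by auto
      ultimately show "r \<in> (\<lambda>(a,b). y[p:=a, Suc p:=b]) ` ({..<N} \<times> {..<N})" by force
    qed
  next
    show "(\<lambda>(a,b). y[p:=a, Suc p:=b]) ` ({..<N} \<times> {..<N}) \<subseteq> S"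
      using y unfolding S_def by (auto intro!: mindex_upd simp: nth_list_update)
  qed
  also have "(\<Sum>r\<in>(\<lambda>(a,b). y[p:=a, Suc p:=b]) ` ({..<N} \<times> {..<N}). R (y!p) (y!Suc p) (r!p) (r!Suc p) * W r)
     = (\<Sum>(a,b)\<in>{..<N} \<times> {..<N}. R (y!p) (y!Suc p) a b * W (y[p:=a, Suc p:=b]))"
    using sum.reindex[OF inj2, of "\<lambda>r. R (y!p) (y!Suc p) (r!p) (r!Suc p) * W r"] ly p
    by (simp add: nth_list_update case_prod_unfold)
  also have "\<dots> = (\<Sum>a<N. \<Sum>b<N. R (y!p) (y!Suc p) a b * W (y[p:=a, Suc p:=b]))"
    by (simp add: sum.cartesian_product)
  finally show ?thesis .
qed

definition mon :: "nat \<Rightarrow> nat list \<Rightarrow> (nat \<Rightarrow> complex) \<Rightarrow> complex" where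
  "mon n r z = (\<Prod>q<n. z q ^ (r!q))"

definition pf :: "nat \<Rightarrow> nat \<Rightarrow> (nat list \<Rightarrow> complex) \<Rightarrow> (nat \<Rightarrow> complex) \<Rightarrow> complex" where
  "pf N n v z = (\<Sum>r\<in>mindex N n. v r * mon n r z)"

definition app :: "nat \<Rightarrow> nat \<Rightarrow> op \<Rightarrow> (nat list \<Rightarrow> complex) \<Rightarrow> nat list \<Rightarrow> complex" where
  "app N n A v = (\<lambda>r. \<Sum>y\<in>mindex N n. A r y * v y)"

definition opG :: "((nat \<Rightarrow> complex) \<Rightarrow> (nat \<Rightarrow> complex)) \<Rightarrow> ((nat \<Rightarrow> complex) \<Rightarrow> complex) \<Rightarrow> complex
    \<Rightarrow> ((nat \<Rightarrow> complex) \<Rightarrow> complex) \<Rightarrow> (nat \<Rightarrow> complex) \<Rightarrow> complex" where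
  "opG \<tau> D c G z = G (\<tau> z) - c * (G z - G (\<tau> z)) / D z"

definition tK :: "complex \<Rightarrow> nat \<Rightarrow> (nat \<Rightarrow> complex) \<Rightarrow> (nat \<Rightarrow> complex)" where
  "tK g p z = z(p := - z p - g)"
definition tR :: "complex \<Rightarrow> nat \<Rightarrow> (nat \<Rightarrow> complex) \<Rightarrow> (nat \<Rightarrow> complex)" where
  "tR h p z = z(p := z (Suc p) - h, Suc p := z p + h)"
definition opK where "opK \<nu> g p = opG (tK g p) (\<lambda>z. 2 * z p + g) (2*\<nu>)"
definition opR where "opR \<kappa> h p = opG (tR h p) (\<lambda>z. z p - z (Suc p) + h) \<kappa>"

lemma opG_lin:
  assumes "finite S"
  shows "opG \<tau> D c (\<lambda>w. \<Sum>y\<in>S. f y * M y w) z = (\<Sum>y\<in>S. f y * opG \<tau> D c (M y) z)"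
proof -
  have "c * ((\<Sum>y\<in>S. f y * M y z) - (\<Sum>y\<in>S. f y * M y (\<tau> z))) / D z = (\<Sum>y\<in>S. f y * (c * (M y z - M y (\<tau> z)) / D z))"
    by (simp add: sum_subtractf[symmetric] sum_distrib_left sum_divide_distrib[symmetric] algebra_simps)
  then show ?thesis unfolding opG_def by (simp add: sum_subtractf[symmetric] algebra_simps)
qed

lemma mono_split1:
  assumes "p < n"
  shows "mon n y z = z p ^ (y!p) * (\<Prod>q\<in>{..<n}-{p}. z q ^ (y!q))"
  unfolding mon_def using assms by (simp add: prod.remove)

lemma mono_split2:
  assumes "Suc p < n"
  shows "mon n y z = z p ^ (y!p) * z (Suc p) ^ (y!Suc p) * (\<Prod>q\<in>{..<n}-{p,Suc p}. z q ^ (y!q))"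
proof -
  have "mon n y z = z p ^ (y!p) * (\<Prod>q\<in>{..<n}-{p}. z q ^ (y!q))" using assms by (intro mono_split1) auto
  also have "(\<Prod>q\<in>{..<n}-{p}. z q ^ (y!q)) = z (Suc p) ^ (y!Suc p) * (\<Prod>q\<in>{..<n}-{p}-{Suc p}. z q ^ (y!q))"
    using assms by (intro prod.remove) auto
  also have "{..<n}-{p}-{Suc p} = {..<n}-{p,Suc p}" by auto
  finally show ?thesis by (simp add: mult.assoc)
qed

lemma rest_upd1: "(\<Prod>q\<in>{..<n}-{p}. (z(p:=t)) q ^ (y[p:=a]!q)) = (\<Prod>q\<in>{..<n}-{p}. z q ^ (y!q))"
  by (intro prod.cong refl) auto

lemma rest_upd2: "(\<Prod>q\<in>{..<n}-{p,Suc p}. (z(p:=t, Suc p := s)) q ^ (y[p:=a, Suc p:=b]!q)) = (\<Prod>q\<in>{..<n}-{p,Suc p}. z q ^ (y!q))"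
  by (intro prod.cong refl) auto

lemma pf_app: "pf N n (app N n A v) z = (\<Sum>y\<in>mindex N n. v y * (\<Sum>r\<in>mindex N n. A r y * mon n r z))"
proof -
  have "pf N n (app N n A v) z = (\<Sum>r\<in>mindex N n. \<Sum>y\<in>mindex N n. v y * (A r y * mon n r z))"
    unfolding pf_def app_def sum_distrib_right by (simp add: algebra_simps)
  also have "\<dots> = (\<Sum>y\<in>mindex N n. \<Sum>r\<in>mindex N n. v y * (A r y * mon n r z))"
    by (rule sum.swap)
  finally show ?thesis by (simp add: sum_distrib_left)
qed

lemma pf_eta: "pf N n v = (\<lambda>w. \<Sum>y\<in>mindex N n. v y * mon n y w)"
  unfolding pf_def ..

lemma gen_K:
  assumes p: "p < n" and y: "y \<in> mindex N n" and d: "2 * z p + g \<noteq> 0"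
  shows "(\<Sum>r\<in>mindex N n. site1 n (Kra \<nu> g) p r y * mon n r z) = opK \<nu> g p (mon n y) z"
proof -
  have ly: "length y = n" and yp: "y!p < N" using y p unfolding mindex_def by auto
  define Rst where "Rst = (\<Prod>q\<in>{..<n}-{p}. z q ^ (y!q))"
  have "(\<Sum>r\<in>mindex N n. site1 n (Kra \<nu> g) p r y * mon n r z) = (\<Sum>a<N. Kra \<nu> g (y!p) a * mon n (y[p:=a]) z)"
    by (rule site1_sum[OF p y])
  also have "\<dots> = (\<Sum>a<N. Kra \<nu> g (y!p) a * z p ^ a) * Rst"
    unfolding sum_distrib_right Rst_def
  proof (intro sum.cong refl)
    fix a assume "a \<in> {..<N}"
    have "mon n (y[p:=a]) z = z p ^ a * (\<Prod>q\<in>{..<n}-{p}. z q ^ (y!q))"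
      unfolding mono_split1[OF p] using ly p rest_upd1[where n=n and p=p and z=z and t="z p" and y=y and a=a] by simp
    then show "Kra \<nu> g (y!p) a * mon n (y[p:=a]) z = Kra \<nu> g (y!p) a * z p ^ a * (\<Prod>q\<in>{..<n}-{p}. z q ^ (y!q))"
      by simp
  qed
  also have "\<dots> = ((- z p - g)^(y!p) - 2*\<nu>*(z p^(y!p) - (- z p - g)^(y!p))/(2*z p+g)) * Rst"
    using K_val[OF yp d] by simp
  also have "\<dots> = opK \<nu> g p (mon n y) z"
  proof -
    have m1: "mon n y z = z p ^ (y!p) * Rst" unfolding Rst_def by (rule mono_split1[OF p])
    have m2: "mon n y (tK g p z) = (- z p - g) ^ (y!p) * Rst"
      unfolding Rst_def mono_split1[OF p] tK_def using rest_upd1[where n=n and p=p and z=z and t="- z p - g" and y=y and a="y!p"] ly p by simp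
    show ?thesis unfolding opK_def opG_def m1 m2 by (simp add: algebra_simps)
  qed
  finally show ?thesis .
qed

lemma gen_R:
  assumes p: "Suc p < n" and y: "y \<in> mindex N n" and d: "z p - z (Suc p) + h \<noteq> 0" and h: "h \<noteq> 0"
  shows "(\<Sum>r\<in>mindex N n. site2 n (Rcra \<kappa> h) p r y * mon n r z) = opR \<kappa> h p (mon n y) z"
proof -
  have ly: "length y = n" and yp: "y!p < N" "y!Suc p < N" using y p unfolding mindex_def by auto
  define Rst where "Rst = (\<Prod>q\<in>{..<n}-{p,Suc p}. z q ^ (y!q))"
  have "(\<Sum>r\<in>mindex N n. site2 n (Rcra \<kappa> h) p r y * mon n r z) = (\<Sum>a<N. \<Sum>b<N. Rcra \<kappa> h (y!p) (y!Suc p) a b * mon n (y[p:=a, Suc p:=b]) z)"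
    by (rule site2_sum[OF p y])
  also have "\<dots> = (\<Sum>a<N. \<Sum>b<N. Rcra \<kappa> h (y!p) (y!Suc p) a b * z p ^ a * z (Suc p) ^ b) * Rst"
    unfolding sum_distrib_right Rst_def
  proof (intro sum.cong refl)
    fix a b assume "a \<in> {..<N}" "b \<in> {..<N}"
    have "mon n (y[p:=a, Suc p:=b]) z = z p ^ a * z (Suc p) ^ b * (\<Prod>q\<in>{..<n}-{p,Suc p}. z q ^ (y!q))"
      unfolding mono_split2[OF p] using ly p rest_upd2[where n=n and p=p and z=z and t="z p" and s="z (Suc p)" and y=y and a=a and b=b] by (simp add: nth_list_update)
    then show "Rcra \<kappa> h (y!p) (y!Suc p) a b * mon n (y[p:=a, Suc p:=b]) z = Rcra \<kappa> h (y!p) (y!Suc p) a b * z p ^ a * z (Suc p) ^ b * (\<Prod>q\<in>{..<n}-{p,Suc p}. z q ^ (y!q))"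
      by simp
  qed
  also have "\<dots> = ((z (Suc p) - h)^(y!p) * (z p + h)^(y!Suc p) - \<kappa>*(z p^(y!p) * z (Suc p)^(y!Suc p) - (z (Suc p) - h)^(y!p) * (z p + h)^(y!Suc p))/(z p - z (Suc p) + h)) * Rst"
    using R_val[OF h yp d, of \<kappa>] by simp
  also have "\<dots> = opR \<kappa> h p (mon n y) z"
  proof -
    have m1: "mon n y z = z p ^ (y!p) * z (Suc p) ^ (y!Suc p) * Rst" unfolding Rst_def by (rule mono_split2[OF p])
    have m2: "mon n y (tR h p z) = (z (Suc p) - h)^(y!p) * (z p + h)^(y!Suc p) * Rst"
      unfolding Rst_def mono_split2[OF p] tR_def using rest_upd2[where n=n and p=p and z=z and t="z (Suc p) - h" and s="z p + h" and y=y and a="y!p" and b="y!Suc p"] ly p by simp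
    show ?thesis unfolding opR_def opG_def m1 m2 by (simp add: algebra_simps)
  qed
  finally show ?thesis .
qed

lemma link_K:
  assumes p: "p < n" and d: "2 * z p + g \<noteq> 0"
  shows "pf N n (app N n (site1 n (Kra \<nu> g) p) v) z = opK \<nu> g p (pf N n v) z"
proof -
  have "pf N n (app N n (site1 n (Kra \<nu> g) p) v) z = (\<Sum>y\<in>mindex N n. v y * opK \<nu> g p (mon n y) z)"
    unfolding pf_app
  proof (intro sum.cong refl)
    fix y assume "y \<in> mindex N n"
    then show "v y * (\<Sum>r\<in>mindex N n. site1 n (Kra \<nu> g) p r y * mon n r z) = v y * opK \<nu> g p (mon n y) z"
      using gen_K[where z=z, OF p _ d] by simp
  qed
  also have "\<dots> = opK \<nu> g p (pf N n v) z"
    unfolding pf_eta opK_def opG_lin[OF mindex_fin] ..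
  finally show ?thesis .
qed

lemma link_R:
  assumes p: "Suc p < n" and d: "z p - z (Suc p) + h \<noteq> 0" and h: "h \<noteq> 0"
  shows "pf N n (app N n (site2 n (Rcra \<kappa> h) p) v) z = opR \<kappa> h p (pf N n v) z"
proof -
  have "pf N n (app N n (site2 n (Rcra \<kappa> h) p) v) z = (\<Sum>y\<in>mindex N n. v y * opR \<kappa> h p (mon n y) z)"
    unfolding pf_app
  proof (intro sum.cong refl)
    fix y assume "y \<in> mindex N n"
    then show "v y * (\<Sum>r\<in>mindex N n. site2 n (Rcra \<kappa> h) p r y * mon n r z) = v y * opR \<kappa> h p (mon n y) z"
      using gen_R[where z=z, OF p _ d h] by simp
  qed
  also have "\<dots> = opR \<kappa> h p (pf N n v) z"
    unfolding pf_eta opR_def opG_lin[OF mindex_fin] ..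
  finally show ?thesis .
qed

definition grp :: "complex set \<Rightarrow> bool" where
  "grp L = (0 \<in> L \<and> (\<forall>x\<in>L. \<forall>y\<in>L. x + y \<in> L \<and> -x \<in> L))"

definition lat :: "complex \<Rightarrow> complex \<Rightarrow> complex \<Rightarrow> complex set" where
  "lat h g0 gn = range (\<lambda>(a::int,b::int,c::int). of_int a * h + of_int b * g0 + of_int c * gn)"

definition genp :: "complex set \<Rightarrow> nat \<Rightarrow> (nat \<Rightarrow> complex) \<Rightarrow> bool" where
  "genp L n z = (\<forall>p<n. \<forall>q<n. (p \<noteq> q \<longrightarrow> z p - z q \<notin> L) \<and> z p + z q \<notin> L)"

lemma grp_lat: "grp (lat h g0 gn)"
  unfolding grp_def lat_def
proof (intro conjI ballI)
  show "0 \<in> range (\<lambda>(a::int,b::int,c::int). of_int a * h + of_int b * g0 + of_int c * gn)"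
    by (rule range_eqI[of _ _ "(0,0,0)"]) simp
  fix x y assume x: "x \<in> range (\<lambda>(a::int,b::int,c::int). of_int a * h + of_int b * g0 + of_int c * gn)"
    and y: "y \<in> range (\<lambda>(a::int,b::int,c::int). of_int a * h + of_int b * g0 + of_int c * gn)"
  obtain a b c where xa: "x = of_int a * h + of_int b * g0 + of_int c * gn" using x by auto
  obtain a' b' c' where ya: "y = of_int a' * h + of_int b' * g0 + of_int c' * gn" using y by auto
  show "x + y \<in> range (\<lambda>(a::int,b::int,c::int). of_int a * h + of_int b * g0 + of_int c * gn)"
    by (rule range_eqI[of _ _ "(a+a',b+b',c+c')"]) (simp add: xa ya algebra_simps)
  show "- x \<in> range (\<lambda>(a::int,b::int,c::int). of_int a * h + of_int b * g0 + of_int c * gn)"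
    by (rule range_eqI[of _ _ "(-a,-b,-c)"]) (simp add: xa algebra_simps)
qed

lemma lat_mem: "of_int a * h + of_int b * g0 + of_int c * gn \<in> lat h g0 gn"
  unfolding lat_def by (rule range_eqI[of _ _ "(a,b,c)"]) simp

lemma lat_count: "countable (lat h g0 gn)"
  unfolding lat_def by simp

lemma grp_add: "grp L \<Longrightarrow> x \<in> L \<Longrightarrow> y \<in> L \<Longrightarrow> x + y \<in> L"
  unfolding grp_def by auto
lemma grp_neg: "grp L \<Longrightarrow> x \<in> L \<Longrightarrow> -x \<in> L"
  unfolding grp_def by auto
lemma grp_diff: "grp L \<Longrightarrow> x \<in> L \<Longrightarrow> y \<in> L \<Longrightarrow> x - y \<in> L"
  using grp_add[of L x "-y"] grp_neg[of L y] by simp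

lemma grp_shift:
  assumes "grp L" "x \<notin> L" "c \<in> L"
  shows "x + c \<notin> L" "-x + c \<notin> L"
proof -
  show "x + c \<notin> L"
  proof
    assume "x + c \<in> L"
    then have "(x + c) - c \<in> L" using assms by (intro grp_diff) auto
    then show False using assms by simp
  qed
  show "-x + c \<notin> L"
  proof
    assume "-x + c \<in> L"
    then have "-((-x + c) - c) \<in> L" using assms by (intro grp_neg grp_diff) auto
    then show False using assms by simp
  qed
qed

lemma comb_notin:
  assumes L: "grp L" and d: "u - w \<notin> L" and p: "u + w \<notin> L" and s1: "s1 = 1 \<or> s1 = -1" and s2: "s2 = 1 \<or> s2 = -1" and c: "c \<in> L"
  shows "s1 * u + s2 * w + c \<notin> L"
  using s1 s2
proof (elim disjE)
  assume "s1 = 1" "s2 = 1" then show ?thesis using grp_shift(1)[OF L p c] by simp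
next
  assume "s1 = 1" "s2 = -1" then show ?thesis using grp_shift(1)[OF L d c] by simp
next
  assume "s1 = -1" "s2 = 1" then show ?thesis using grp_shift(2)[OF L d c] by (simp add: algebra_simps)
next
  assume "s1 = -1" "s2 = -1" then show ?thesis using grp_shift(2)[OF L p c] by (simp add: algebra_simps)
qed

lemma genp_perm:
  assumes L: "grp L" and g: "genp L n z" and pi: "\<forall>q<n. \<pi> q < n" "inj_on \<pi> {..<n}"
    and s: "\<forall>q<n. s q = 1 \<or> s q = -1" and c: "\<forall>q<n. c q \<in> L"
    and z': "\<forall>q<n. z' q = s q * z (\<pi> q) + c q"
  shows "genp L n z'"
  unfolding genp_def
proof (intro allI impI conjI)
  fix p q assume pq: "p < n" "q < n"
  have g1: "z (\<pi> p) - z (\<pi> q) \<notin> L" "z (\<pi> p) + z (\<pi> q) \<notin> L" if "p \<noteq> q"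
  proof -
    have "\<pi> p \<noteq> \<pi> q" using pi(2) pq that by (meson inj_on_def lessThan_iff)
    then show "z (\<pi> p) - z (\<pi> q) \<notin> L" "z (\<pi> p) + z (\<pi> q) \<notin> L" using g pi pq unfolding genp_def by auto
  qed
  have cd: "c p - c q \<in> L" "c p + c q \<in> L" using c pq L by (auto intro: grp_diff grp_add)
  {
    assume "p \<noteq> q"
    have sp: "s p = 1 \<or> s p = -1" and sq: "- s q = 1 \<or> - s q = -1" using s pq by auto
    have "s p * z (\<pi> p) + (- s q) * z (\<pi> q) + (c p - c q) \<notin> L"
      by (rule comb_notin[OF L g1[OF \<open>p\<noteq>q\<close>] sp sq cd(1)])
    then show "z' p - z' q \<notin> L" using z' pq by (simp add: algebra_simps)
  }
  show "z' p + z' q \<notin> L"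
  proof (cases "p = q")
    case False
    have sp: "s p = 1 \<or> s p = -1" and sq: "s q = 1 \<or> s q = -1" using s pq by auto
    have "s p * z (\<pi> p) + s q * z (\<pi> q) + (c p + c q) \<notin> L"
      by (rule comb_notin[OF L g1[OF False] sp sq cd(2)])
    then show ?thesis using z' pq by (simp add: algebra_simps)
  next
    case True
    have "\<pi> p < n" using pi pq by auto
    then have zz: "z (\<pi> p) + z (\<pi> p) \<notin> L" using g unfolding genp_def by blast
    have "s p = 1 \<or> s p = -1" using s pq by auto
    then have "s p * (z (\<pi> p) + z (\<pi> p)) + (c p + c p) \<notin> L"
      using grp_shift[OF L zz, of "c p + c p"] cd(2) True by auto
    then show ?thesis using z' pq True by (simp add: algebra_simps)
  qed
qed

lemma genp_tK:
  assumes L: "grp L" and g: "genp L n z" and p: "p < n" and gL: "g \<in> L"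
  shows "genp L n (tK g p z)"
proof (rule genp_perm[OF L g, where \<pi>=id and s="\<lambda>q. if q = p then -1 else 1" and c="\<lambda>q. if q = p then -g else 0"])
  show "\<forall>q<n. (if q = p then - g else 0) \<in> L" using L gL by (auto intro: grp_neg simp: grp_def)
  show "\<forall>q<n. tK g p z q = (if q = p then - 1 else 1) * z (id q) + (if q = p then - g else 0)"
    unfolding tK_def by auto
qed auto

lemma genp_tR:
  assumes L: "grp L" and g: "genp L n z" and p: "Suc p < n" and hL: "h \<in> L"
  shows "genp L n (tR h p z)"
proof (rule genp_perm[OF L g, where \<pi>="\<lambda>q. if q = p then Suc p else if q = Suc p then p else q" and s="\<lambda>q. 1"
      and c="\<lambda>q. if q = p then -h else if q = Suc p then h else 0"])
  show "\<forall>q<n. (if q = p then - h else if q = Suc p then h else 0) \<in> L" using L hL by (auto intro: grp_neg simp: grp_def)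
  show "\<forall>q<n. tR h p z q = 1 * z (if q = p then Suc p else if q = Suc p then p else q) + (if q = p then - h else if q = Suc p then h else 0)"
    unfolding tR_def by auto
  show "\<forall>q<n. (if q = p then Suc p else if q = Suc p then p else q) < n" using p by auto
  show "inj_on (\<lambda>q. if q = p then Suc p else if q = Suc p then p else q) {..<n}"
    by (rule inj_onI) (auto split: if_splits)
qed auto

lemma genp_DK:
  assumes L: "grp L" and g: "genp L n z" and p: "p < n" and gL: "g \<in> L"
  shows "2 * z p + g \<noteq> 0"
proof
  assume a: "2 * z p + g = 0"
  have "z p + z p = (2 * z p + g) - g" by simp
  then have "z p + z p = -g" using a by simp
  moreover have "-g \<in> L" using L gL by (rule grp_neg)
  moreover have "z p + z p \<notin> L" using g p unfolding genp_def by blast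
  ultimately show False by simp
qed

lemma genp_DR:
  assumes L: "grp L" and g: "genp L n z" and p: "Suc p < n" and hL: "h \<in> L"
  shows "z p - z (Suc p) + h \<noteq> 0"
proof
  assume a: "z p - z (Suc p) + h = 0"
  have "z p - z (Suc p) = (z p - z (Suc p) + h) - h" by simp
  then have "z p - z (Suc p) = -h" using a by simp
  moreover have "-h \<in> L" using L hL by (rule grp_neg)
  moreover have "z p - z (Suc p) \<notin> L" using g p unfolding genp_def by auto
  ultimately show False by simp
qed

lemma poly_vanish:
  fixes c :: "nat \<Rightarrow> complex"
  assumes S: "infinite S" and z: "\<forall>w\<in>S. (\<Sum>i<N. c i * w^i) = 0" and x: "x < N"
  shows "c x = 0"
proof -
  define P where "P = (\<Sum>i<N. monom (c i) i)"
  have ev: "poly P w = (\<Sum>i<N. c i * w^i)" for w unfolding P_def by (simp add: poly_sum poly_monom)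
  have "P = 0"
  proof (rule ccontr)
    assume "P \<noteq> 0"
    then have "finite {w. poly P w = 0}" by (rule poly_roots_finite)
    moreover have "S \<subseteq> {w. poly P w = 0}" using z ev by auto
    ultimately show False using S finite_subset by blast
  qed
  have "coeff P x = (\<Sum>i<N. if x = i then c i else 0)" unfolding P_def by (simp add: coeff_sum coeff_monom)
  also have "\<dots> = c x" using x by (simp add: sum.delta)
  finally show ?thesis using \<open>P = 0\<close> by simp
qed

lemma mindex_Suc: "mindex N (Suc n) = (\<lambda>(x,t). x # t) ` ({..<N} \<times> mindex N n)"
proof
  show "mindex N (Suc n) \<subseteq> (\<lambda>(x,t). x # t) ` ({..<N} \<times> mindex N n)"
  proof
    fix r assume "r \<in> mindex N (Suc n)"
    then obtain x t where r: "r = x # t" "length t = n" "x < N" "\<forall>a\<in>set t. a < N"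
      unfolding mindex_def by (auto simp: length_Suc_conv)
    then show "r \<in> (\<lambda>(x,t). x # t) ` ({..<N} \<times> mindex N n)" unfolding mindex_def by force
  qed
  show "(\<lambda>(x,t). x # t) ` ({..<N} \<times> mindex N n) \<subseteq> mindex N (Suc n)"
    unfolding mindex_def by auto
qed

lemma mon_Cons: "mon (Suc n) (x # t) z = z 0 ^ x * mon n t (\<lambda>q. z (Suc q))"
  unfolding mon_def prod.lessThan_Suc_shift by simp

lemma pf_Suc: "pf N (Suc n) v z = (\<Sum>x<N. z 0 ^ x * pf N n (\<lambda>t. v (x # t)) (\<lambda>q. z (Suc q)))"
proof -
  have inj: "inj_on (\<lambda>(x,t). x # t) ({..<N} \<times> mindex N n)" by (rule inj_onI) auto
  have "pf N (Suc n) v z = (\<Sum>(x,t)\<in>{..<N} \<times> mindex N n. v (x # t) * mon (Suc n) (x # t) z)"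
    unfolding pf_def mindex_Suc sum.reindex[OF inj] by (simp add: case_prod_unfold)
  also have "\<dots> = (\<Sum>x<N. \<Sum>t\<in>mindex N n. z 0 ^ x * (v (x # t) * mon n t (\<lambda>q. z (Suc q))))"
    unfolding sum.cartesian_product[symmetric] mon_Cons by (simp add: algebra_simps)
  also have "\<dots> = (\<Sum>x<N. z 0 ^ x * pf N n (\<lambda>t. v (x # t)) (\<lambda>q. z (Suc q)))"
    unfolding pf_def by (simp add: sum_distrib_left)
  finally show ?thesis .
qed

lemma genp_cons:
  assumes g: "genp L n z'" and w: "w + w \<notin> L"
    and wq: "\<forall>q<n. w - z' q \<notin> L \<and> z' q - w \<notin> L \<and> w + z' q \<notin> L \<and> z' q + w \<notin> L"
  shows "genp L (Suc n) (case_nat w z')"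
  unfolding genp_def
proof (intro allI impI)
  fix p q assume pq: "p < Suc n" "q < Suc n"
  show "(p \<noteq> q \<longrightarrow> case_nat w z' p - case_nat w z' q \<notin> L) \<and> case_nat w z' p + case_nat w z' q \<notin> L"
  proof (cases p)
    case 0
    then show ?thesis using pq wq w by (cases q) auto
  next
    case (Suc p')
    then show ?thesis using pq wq w g unfolding genp_def by (cases q) auto
  qed
qed

lemma infinite_co_countable:
  assumes "countable (B :: complex set)"
  shows "infinite (UNIV - B)"
proof
  assume "finite (UNIV - B)"
  then have "countable (UNIV - B)" by (rule countable_finite)
  then have "countable (B \<union> (UNIV - B))" using assms by (rule countable_Un[rotated])
  then show False using uncountable_UNIV_complex by simp
qed

lemma vanish:
  assumes L: "countable L"
  shows "(\<forall>z. genp L n z \<longrightarrow> pf N n v z = 0) \<Longrightarrow> r \<in> mindex N n \<Longrightarrow> v r = 0"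
proof (induction n arbitrary: v r)
  case 0
  have "r = []" using 0(2) unfolding mindex_def by simp
  have "mindex N 0 = {[]}" unfolding mindex_def by auto
  moreover have "genp L 0 z" for z unfolding genp_def by simp
  ultimately have "v [] * mon 0 [] (\<lambda>_. 0) = 0" using 0(1) unfolding pf_def by auto
  then show ?case using \<open>r = []\<close> unfolding mon_def by simp
next
  case (Suc n)
  obtain x0 t0 where r: "r = x0 # t0" "x0 < N" "t0 \<in> mindex N n"
    using Suc.prems(2) unfolding mindex_Suc by auto
  have "\<forall>z'. genp L n z' \<longrightarrow> pf N n (\<lambda>t. v (x0 # t)) z' = 0"
  proof (intro allI impI)
    fix z' assume gz: "genp L n z'"
    define B where "B = {w. w + w \<in> L} \<union> (\<Union>q<n. {w. w - z' q \<in> L \<or> z' q - w \<in> L \<or> w + z' q \<in> L \<or> z' q + w \<in> L})"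
    have cB: "countable B"
    proof -
      have "{w. w + w \<in> L} \<subseteq> (\<lambda>l. l / 2) ` L"
      proof
        fix w assume "w \<in> {w. w + w \<in> L}"
        moreover have "w = (w + w) / 2" by simp
        ultimately show "w \<in> (\<lambda>l. l / 2) ` L" by blast
      qed
      then have c1: "countable {w. w + w \<in> L}" using L by (meson countable_image countable_subset)
      have "{w. w - z' q \<in> L \<or> z' q - w \<in> L \<or> w + z' q \<in> L \<or> z' q + w \<in> L}
          \<subseteq> (\<lambda>l. l + z' q) ` L \<union> (\<lambda>l. z' q - l) ` L \<union> (\<lambda>l. l - z' q) ` L" for q
      proof
        fix w assume "w \<in> {w. w - z' q \<in> L \<or> z' q - w \<in> L \<or> w + z' q \<in> L \<or> z' q + w \<in> L}"
        then show "w \<in> (\<lambda>l. l + z' q) ` L \<union> (\<lambda>l. z' q - l) ` L \<union> (\<lambda>l. l - z' q) ` L"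
          by (auto intro: image_eqI[where x="w - z' q"] image_eqI[where x="z' q - w"] image_eqI[where x="w + z' q"]
              simp: add.commute)
      qed
      then have "countable {w. w - z' q \<in> L \<or> z' q - w \<in> L \<or> w + z' q \<in> L \<or> z' q + w \<in> L}" for q
        using L by (meson countable_Un countable_image countable_subset)
      then show ?thesis unfolding B_def using c1 by auto
    qed
    have S: "infinite (UNIV - B)" using infinite_co_countable[OF cB] .
    have "\<forall>w\<in>UNIV - B. (\<Sum>x<N. pf N n (\<lambda>t. v (x # t)) z' * w^x) = 0"
    proof
      fix w assume "w \<in> UNIV - B"
      then have "genp L (Suc n) (case_nat w z')"
        by (intro genp_cons[OF gz]) (auto simp: B_def)
      then have "pf N (Suc n) v (case_nat w z') = 0" using Suc.prems(1) by auto
      then show "(\<Sum>x<N. pf N n (\<lambda>t. v (x # t)) z' * w^x) = 0"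
        unfolding pf_Suc by (simp add: mult.commute)
    qed
    from poly_vanish[OF S this r(2)] show "pf N n (\<lambda>t. v (x0 # t)) z' = 0" .
  qed
  from Suc.IH[OF this r(3)] show ?case using r(1) by simp
qed

lemma pf_diff: "pf N n (\<lambda>r. u r - w r) z = pf N n u z - pf N n w z"
  unfolding pf_def by (simp add: sum_subtractf algebra_simps)

lemma opeq_from:
  assumes L: "countable L"
    and e: "\<forall>c\<in>mindex N n. \<forall>z. genp L n z \<longrightarrow> pf N n (\<lambda>r. X r c) z = pf N n (\<lambda>r. Y r c) z"
  shows "opeq N n X Y"
  unfolding opeq_def
proof (intro ballI)
  fix r c assume r: "r \<in> mindex N n" and c: "c \<in> mindex N n"
  have "\<forall>z. genp L n z \<longrightarrow> pf N n (\<lambda>r. X r c - Y r c) z = 0"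
    using e c unfolding pf_diff by auto
  from vanish[OF L this r] show "X r c = Y r c" by simp
qed

lemma col_opmul: "pf N n (\<lambda>r. opmul N n A B r c) = pf N n (app N n A (\<lambda>r. B r c))"
  unfolding opmul_def app_def ..

lemma col_base:
  assumes c: "c \<in> mindex N n"
  shows "pf N n (\<lambda>r. A r c) = pf N n (app N n A (\<lambda>r. opid r c))"
proof -
  have "app N n A (\<lambda>r. opid r c) = (\<lambda>r. A r c)"
    unfolding app_def opid_def using c mindex_fin[of N n] by (auto simp: if_distrib cong: if_cong)
  then show ?thesis by simp
qed

lemma pf_opid:
  assumes c: "c \<in> mindex N n"
  shows "pf N n (\<lambda>r. opid r c) = mon n c"
proof
  fix z
  have "pf N n (\<lambda>r. opid r c) z = (\<Sum>r\<in>mindex N n. if r = c then mon n r z else 0)"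
    unfolding pf_def opid_def by (rule sum.cong) auto
  also have "\<dots> = mon n c z" using c mindex_fin[of N n] by (simp add: sum.delta')
  finally show "pf N n (\<lambda>r. opid r c) z = mon n c z" .
qed

definition eqon :: "complex set \<Rightarrow> nat \<Rightarrow> ((nat \<Rightarrow> complex) \<Rightarrow> complex) \<Rightarrow> ((nat \<Rightarrow> complex) \<Rightarrow> complex) \<Rightarrow> bool" where
  "eqon L n G G' = (\<forall>z. genp L n z \<longrightarrow> G z = G' z)"

lemma eqon_trans: "eqon L n A B \<Longrightarrow> eqon L n B C \<Longrightarrow> eqon L n A C"
  unfolding eqon_def by auto

definition opT :: "nat \<Rightarrow> complex \<Rightarrow> complex \<Rightarrow> complex \<Rightarrow> complex \<Rightarrow> complex \<Rightarrow> complex \<Rightarrow> nat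
     \<Rightarrow> ((nat \<Rightarrow> complex) \<Rightarrow> complex) \<Rightarrow> (nat \<Rightarrow> complex) \<Rightarrow> complex" where
  "opT n \<kappa> h \<nu>0 g0 \<nu>n gn j = (if j = 0 then opK \<nu>0 g0 0 else if j = n then opK \<nu>n gn (n-1) else opR \<kappa> h (j-1))"

lemma opG_cong:
  assumes "G z = G' z" "G (\<tau> z) = G' (\<tau> z)"
  shows "opG \<tau> D c G z = opG \<tau> D c G' z"
  unfolding opG_def using assms by simp


lemma Kloc1:
  assumes "2*\<alpha> + g = 0"
  shows "opK \<nu> g p H (z(p := u + \<alpha>, Suc p := v + \<beta>)) = Kc \<nu> (\<lambda>u v. H (z(p := u + \<alpha>, Suc p := v + \<beta>))) u v"
proof -
  have pt: "tK g p (z(p := u + \<alpha>, Suc p := v + \<beta>)) = z(p := (-u) + \<alpha>, Suc p := v + \<beta>)"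
    unfolding tK_def using assms by (auto simp: fun_eq_iff algebra_simps)
  have d: "2 * (z(p := u + \<alpha>, Suc p := v + \<beta>)) p + g = 2 * u" using assms by (simp add: algebra_simps)
  show ?thesis unfolding opK_def opG_def Kc_def pt d ..
qed

lemma Kloc2:
  assumes "2*\<beta> + g = 0"
  shows "opK \<nu> g (Suc p) H (z(p := u + \<alpha>, Suc p := v + \<beta>)) = Kc2 \<nu> (\<lambda>u v. H (z(p := u + \<alpha>, Suc p := v + \<beta>))) u v"
proof -
  have pt: "tK g (Suc p) (z(p := u + \<alpha>, Suc p := v + \<beta>)) = z(p := u + \<alpha>, Suc p := (-v) + \<beta>)"
    unfolding tK_def using assms by (auto simp: fun_eq_iff algebra_simps)
  have d: "2 * (z(p := u + \<alpha>, Suc p := v + \<beta>)) (Suc p) + g = 2 * v" using assms by (simp add: algebra_simps)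
  show ?thesis unfolding opK_def opG_def Kc2_def pt d ..
qed

lemma Rloc:
  assumes "\<beta> = \<alpha> + h"
  shows "opR \<kappa> h p H (z(p := u + \<alpha>, Suc p := v + \<beta>)) = Rc \<kappa> (\<lambda>u v. H (z(p := u + \<alpha>, Suc p := v + \<beta>))) u v"
proof -
  have pt: "tR h p (z(p := u + \<alpha>, Suc p := v + \<beta>)) = z(p := v + \<alpha>, Suc p := u + \<beta>)"
    unfolding tR_def using assms by (auto simp: fun_eq_iff algebra_simps)
  have d: "(z(p := u + \<alpha>, Suc p := v + \<beta>)) p - (z(p := u + \<alpha>, Suc p := v + \<beta>)) (Suc p) + h = u - v"
    using assms by (simp add: algebra_simps)
  show ?thesis unfolding opR_def opG_def Rc_def pt d ..
qed

lemma R1loc: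
  assumes "\<beta> = \<alpha> + h"
  shows "opR \<kappa> h p H (z(p := u + \<alpha>, Suc p := v + \<beta>, Suc (Suc p) := w + \<gamma>))
     = R1 \<kappa> (\<lambda>u v w. H (z(p := u + \<alpha>, Suc p := v + \<beta>, Suc (Suc p) := w + \<gamma>))) u v w"
proof -
  have pt: "tR h p (z(p := u + \<alpha>, Suc p := v + \<beta>, Suc (Suc p) := w + \<gamma>)) = z(p := v + \<alpha>, Suc p := u + \<beta>, Suc (Suc p) := w + \<gamma>)"
    unfolding tR_def using assms by (auto simp: fun_eq_iff algebra_simps)
  have d: "(z(p := u + \<alpha>, Suc p := v + \<beta>, Suc (Suc p) := w + \<gamma>)) p - (z(p := u + \<alpha>, Suc p := v + \<beta>, Suc (Suc p) := w + \<gamma>)) (Suc p) + h = u - v"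
    using assms by (simp add: algebra_simps)
  show ?thesis unfolding opR_def opG_def R1_def pt d ..
qed

lemma R2loc:
  assumes "\<gamma> = \<beta> + h"
  shows "opR \<kappa> h (Suc p) H (z(p := u + \<alpha>, Suc p := v + \<beta>, Suc (Suc p) := w + \<gamma>))
     = R2 \<kappa> (\<lambda>u v w. H (z(p := u + \<alpha>, Suc p := v + \<beta>, Suc (Suc p) := w + \<gamma>))) u v w"
proof -
  have pt: "tR h (Suc p) (z(p := u + \<alpha>, Suc p := v + \<beta>, Suc (Suc p) := w + \<gamma>)) = z(p := u + \<alpha>, Suc p := w + \<beta>, Suc (Suc p) := v + \<gamma>)"
    unfolding tR_def using assms by (auto simp: fun_eq_iff algebra_simps)
  have d: "(z(p := u + \<alpha>, Suc p := v + \<beta>, Suc (Suc p) := w + \<gamma>)) (Suc p) - (z(p := u + \<alpha>, Suc p := v + \<beta>, Suc (Suc p) := w + \<gamma>)) (Suc (Suc p)) + h = v - w"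
    using assms by (simp add: algebra_simps)
  show ?thesis unfolding opR_def opG_def R2_def pt d ..
qed

lemma opG_comm:
  assumes "\<And>z. \<tau>1 (\<tau>2 z) = \<tau>2 (\<tau>1 z)" "\<And>z. D1 (\<tau>2 z) = D1 z" "\<And>z. D2 (\<tau>1 z) = D2 z"
  shows "opG \<tau>1 D1 c1 (opG \<tau>2 D2 c2 G) z = opG \<tau>2 D2 c2 (opG \<tau>1 D1 c1 G) z"
  unfolding opG_def assms by (simp add: divide_inverse algebra_simps)


lemma genp_sum: "genp L n z \<Longrightarrow> a < n \<Longrightarrow> b < n \<Longrightarrow> c \<in> L \<Longrightarrow> z a + z b \<noteq> c"
  unfolding genp_def by blast
lemma genp_dif: "genp L n z \<Longrightarrow> a < n \<Longrightarrow> b < n \<Longrightarrow> a \<noteq> b \<Longrightarrow> c \<in> L \<Longrightarrow> z a - z b \<noteq> c"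
  unfolding genp_def by blast

lemma tK_tK: "p \<noteq> q \<Longrightarrow> tK g p (tK g' q z) = tK g' q (tK g p z)"
  unfolding tK_def by (auto simp: fun_eq_iff)
lemma tK_tR: "p \<noteq> q \<Longrightarrow> p \<noteq> Suc q \<Longrightarrow> tK g p (tR h q z) = tR h q (tK g p z)"
  unfolding tK_def tR_def by (auto simp: fun_eq_iff)
lemma tR_tR: "Suc q < q' \<Longrightarrow> tR h q (tR h q' z) = tR h q' (tR h q z)"
  unfolding tR_def by (auto simp: fun_eq_iff)

lemma comm_KK: "p \<noteq> q \<Longrightarrow> opK \<nu> g p (opK \<nu>' g' q G) z = opK \<nu>' g' q (opK \<nu> g p G) z"
  unfolding opK_def by (rule opG_comm) (auto simp: tK_tK tK_def)
lemma comm_KR: "p \<noteq> q \<Longrightarrow> p \<noteq> Suc q \<Longrightarrow> opK \<nu> g p (opR \<kappa> h q G) z = opR \<kappa> h q (opK \<nu> g p G) z"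
  unfolding opK_def opR_def by (rule opG_comm) (auto simp: tK_tR tK_def tR_def)
lemma comm_RR: "Suc q < q' \<Longrightarrow> opR \<kappa> h q (opR \<kappa> h q' G) z = opR \<kappa> h q' (opR \<kappa> h q G) z"
  unfolding opR_def by (rule opG_comm) (auto simp: tR_tR tR_def)


lemma ne_helper1: "x + x \<noteq> c \<Longrightarrow> c = 2 * a \<Longrightarrow> x - a \<noteq> (0::complex)"
  by auto
lemma ne_helper2: "x - y \<noteq> c \<Longrightarrow> c = a - b \<Longrightarrow> x - a \<noteq> y - (b::complex)"
proof
  assume "x - y \<noteq> c" "c = a - b" "x - a = y - b"
  moreover have "x - y = (x - a) - (y - b) + (a - b)" by simp
  ultimately show False by simp
qed
lemma ne_helper3: "x + y \<noteq> c \<Longrightarrow> c = a + b \<Longrightarrow> x - a \<noteq> -(y - (b::complex))"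
proof
  assume "x + y \<noteq> c" "c = a + b" "x - a = -(y - b)"
  moreover have "x + y = (x - a) + (y - b) + (a + b)" by simp
  ultimately show False by simp
qed
context
  fixes N n :: nat and \<kappa> h \<nu>0 g0 \<nu>n gn :: complex
  assumes n2: "n \<ge> 2" and h0: "h \<noteq> 0"
begin

abbreviation "LL \<equiv> lat h g0 gn"
abbreviation "TT \<equiv> hatT n \<kappa> h \<nu>0 g0 \<nu>n gn"
abbreviation "OT \<equiv> opT n \<kappa> h \<nu>0 g0 \<nu>n gn"

lemma LLg: "grp LL" "h \<in> LL" "g0 \<in> LL" "gn \<in> LL"
  using grp_lat lat_mem[of 1 h 0 g0 0 gn] lat_mem[of 0 h 1 g0 0 gn] lat_mem[of 0 h 0 g0 1 gn] by simp_all

lemma link_T: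
  assumes j: "j \<le> n"
  shows "eqon LL n (pf N n (app N n (TT j) v)) (OT j (pf N n v))"
  unfolding eqon_def
proof (intro allI impI)
  fix z assume g: "genp LL n z"
  consider "j = 0" | "j \<noteq> 0" "j = n" | "j \<noteq> 0" "j \<noteq> n" by blast
  then show "pf N n (app N n (TT j) v) z = OT j (pf N n v) z"
  proof cases
    case 1
    have p: "0 < n" using n2 by simp
    show ?thesis using 1 unfolding hatT_def opT_def
      using link_K[where z=z, OF p genp_DK[OF LLg(1) g p LLg(3)]] by simp
  next
    case 2
    have p: "n - 1 < n" using n2 by simp
    show ?thesis using 2 unfolding hatT_def opT_def
      using link_K[where z=z, OF p genp_DK[OF LLg(1) g p LLg(4)]] by simp
  next
    case 3
    have p: "Suc (j-1) < n" using 3 j by simp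
    show ?thesis using 3 unfolding hatT_def opT_def
      using link_R[where z=z, OF p genp_DR[OF LLg(1) g p LLg(2)] h0] by simp
  qed
qed

lemma cong_T:
  assumes j: "j \<le> n" and e: "eqon LL n G G'"
  shows "eqon LL n (OT j G) (OT j G')"
  unfolding eqon_def
proof (intro allI impI)
  fix z assume g: "genp LL n z"
  consider "j = 0" | "j \<noteq> 0" "j = n" | "j \<noteq> 0" "j \<noteq> n" by blast
  then show "OT j G z = OT j G' z"
  proof cases
    case 1
    have p: "0 < n" using n2 by simp
    have "genp LL n (tK g0 0 z)" by (rule genp_tK[OF LLg(1) g p LLg(3)])
    moreover have e1: "OT j = opK \<nu>0 g0 0" using 1 unfolding opT_def by simp
    ultimately show ?thesis using g e unfolding e1 opK_def eqon_def by (intro opG_cong) auto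
  next
    case 2
    have p: "n - 1 < n" using n2 by simp
    have "genp LL n (tK gn (n-1) z)" by (rule genp_tK[OF LLg(1) g p LLg(4)])
    moreover have e1: "OT j = opK \<nu>n gn (n-1)" using 2 unfolding opT_def by simp
    ultimately show ?thesis using g e unfolding e1 opK_def eqon_def by (intro opG_cong) auto
  next
    case 3
    have p: "Suc (j-1) < n" using 3 j by simp
    have "genp LL n (tR h (j-1) z)" by (rule genp_tR[OF LLg(1) g p LLg(2)])
    moreover have e1: "OT j = opR \<kappa> h (j-1)" using 3 unfolding opT_def by simp
    ultimately show ?thesis using g e unfolding e1 opR_def eqon_def by (intro opG_cong) auto
  qed
qed

lemma step_T:
  assumes j: "j \<le> n"
  shows "eqon LL n (pf N n (\<lambda>r. opmul N n (TT j) X r c)) (OT j (pf N n (\<lambda>r. X r c)))"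
  unfolding col_opmul by (rule link_T[OF j])

lemma base_T:
  assumes j: "j \<le> n" and c: "c \<in> mindex N n"
  shows "eqon LL n (pf N n (\<lambda>r. TT j r c)) (OT j (mon n c))"
  unfolding col_base[OF c] using link_T[OF j, of "\<lambda>r. opid r c"] unfolding pf_opid[OF c] .

lemma LLm: "of_int a * h + of_int b * g0 + of_int c * gn \<in> LL"
  by (rule lat_mem)

lemma rel_sq:
  assumes j: "j \<le> n" and g: "genp LL n z"
  shows "OT j (OT j G) z = G z"
proof -
  consider "j = 0" | "j \<noteq> 0" "j = n" | "j \<noteq> 0" "j \<noteq> n" by blast
  then show ?thesis
  proof cases
    case 1
    define \<alpha> where "\<alpha> = - g0 / 2"
    have l: "\<And>H u v. opK \<nu>0 g0 0 H (z(0 := u + \<alpha>, Suc 0 := v + 0)) = Kc \<nu>0 (\<lambda>u v. H (z(0 := u + \<alpha>, Suc 0 := v + 0))) u v"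
      by (rule Kloc1) (simp add: \<alpha>_def)
    have pz: "z(0 := (z 0 - \<alpha>) + \<alpha>, Suc 0 := (z (Suc 0) - 0) + 0) = z" by simp
    have u0: "z 0 - \<alpha> \<noteq> 0"
      using genp_DK[OF LLg(1) g _ LLg(3)] n2 unfolding \<alpha>_def by (auto simp: field_simps)
    have "OT j (OT j G) z = opK \<nu>0 g0 0 (opK \<nu>0 g0 0 G) (z(0 := (z 0 - \<alpha>) + \<alpha>, Suc 0 := (z (Suc 0) - 0) + 0))"
      using 1 unfolding pz by (simp add: opT_def)
    also have "\<dots> = Kc \<nu>0 (Kc \<nu>0 (\<lambda>u v. G (z(0 := u + \<alpha>, Suc 0 := v + 0)))) (z 0 - \<alpha>) (z (Suc 0) - 0)"
      by (simp only: l)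
    also have "\<dots> = G z" using Kc_sq[OF u0] by simp
    finally show ?thesis .
  next
    case 2
    define \<alpha> where "\<alpha> = - gn / 2"
    define p where "p = n - 1"
    have pn: "p < n" using n2 unfolding p_def by simp
    have l: "\<And>H u v. opK \<nu>n gn p H (z(p := u + \<alpha>, Suc p := v + 0)) = Kc \<nu>n (\<lambda>u v. H (z(p := u + \<alpha>, Suc p := v + 0))) u v"
      by (rule Kloc1) (simp add: \<alpha>_def)
    have pz: "z(p := (z p - \<alpha>) + \<alpha>, Suc p := (z (Suc p) - 0) + 0) = z" by simp
    have u0: "z p - \<alpha> \<noteq> 0"
      using genp_DK[OF LLg(1) g pn LLg(4)] unfolding \<alpha>_def by (auto simp: field_simps)
    have "OT j (OT j G) z = opK \<nu>n gn p (opK \<nu>n gn p G) (z(p := (z p - \<alpha>) + \<alpha>, Suc p := (z (Suc p) - 0) + 0))"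
      using 2 unfolding pz by (simp add: opT_def p_def)
    also have "\<dots> = Kc \<nu>n (Kc \<nu>n (\<lambda>u v. G (z(p := u + \<alpha>, Suc p := v + 0)))) (z p - \<alpha>) (z (Suc p) - 0)"
      by (simp only: l)
    also have "\<dots> = G z" using Kc_sq[OF u0] by simp
    finally show ?thesis .
  next
    case 3
    define p where "p = j - 1"
    have pn: "Suc p < n" using 3 j unfolding p_def by simp
    have l: "\<And>H u v. opR \<kappa> h p H (z(p := u + 0, Suc p := v + h)) = Rc \<kappa> (\<lambda>u v. H (z(p := u + 0, Suc p := v + h))) u v"
      by (rule Rloc) simp
    have pz: "z(p := (z p - 0) + 0, Suc p := (z (Suc p) - h) + h) = z" by simp
    have u0: "z p - 0 \<noteq> z (Suc p) - h"
      using genp_DR[OF LLg(1) g pn LLg(2)] by (auto simp: algebra_simps)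
    have "OT j (OT j G) z = opR \<kappa> h p (opR \<kappa> h p G) (z(p := (z p - 0) + 0, Suc p := (z (Suc p) - h) + h))"
      using 3 unfolding pz by (simp add: opT_def p_def)
    also have "\<dots> = Rc \<kappa> (Rc \<kappa> (\<lambda>u v. G (z(p := u + 0, Suc p := v + h)))) (z p - 0) (z (Suc p) - h)"
      by (simp only: l)
    also have "\<dots> = G z" using Rc_sq[OF u0] by simp
    finally show ?thesis .
  qed
qed

lemma rel_left:
  assumes g: "genp LL n z"
  shows "OT 0 (OT 1 (OT 0 (OT 1 G))) z = OT 1 (OT 0 (OT 1 (OT 0 G))) z"
proof -
  define \<alpha> where "\<alpha> = - g0 / 2"
  define \<beta> where "\<beta> = h - g0 / 2"
  have o: "OT 0 = opK \<nu>0 g0 0" "OT 1 = opR \<kappa> h 0" using n2 by (auto simp: opT_def)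
  have lK: "\<And>H u v. opK \<nu>0 g0 0 H (z(0 := u + \<alpha>, Suc 0 := v + \<beta>)) = Kc \<nu>0 (\<lambda>u v. H (z(0 := u + \<alpha>, Suc 0 := v + \<beta>))) u v"
    by (rule Kloc1) (simp add: \<alpha>_def)
  have lR: "\<And>H u v. opR \<kappa> h 0 H (z(0 := u + \<alpha>, Suc 0 := v + \<beta>)) = Rc \<kappa> (\<lambda>u v. H (z(0 := u + \<alpha>, Suc 0 := v + \<beta>))) u v"
    by (rule Rloc) (simp add: \<alpha>_def \<beta>_def)
  have pz: "z(0 := (z 0 - \<alpha>) + \<alpha>, Suc 0 := (z (Suc 0) - \<beta>) + \<beta>) = z" by simp
  have i0: "0 < n" "Suc 0 < n" using n2 by auto
  have m1: "2 * h - g0 \<in> LL" using LLm[of 2 "-1" 0] by simp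
  have m2: "h - g0 \<in> LL" using LLm[of 1 "-1" 0] by simp
  have m3: "- h \<in> LL" using LLm[of "-1" 0 0] by simp
  have m0: "- g0 \<in> LL" using LLm[of 0 "-1" 0] by simp
  have h1: "z 0 - \<alpha> \<noteq> 0"
    by (rule ne_helper1[OF genp_sum[OF g i0(1) i0(1) m0]]) (simp add: \<alpha>_def)
  have h2: "z (Suc 0) - \<beta> \<noteq> 0"
    by (rule ne_helper1[OF genp_sum[OF g i0(2) i0(2) m1]]) (simp add: \<beta>_def algebra_simps)
  have h3: "z 0 - \<alpha> \<noteq> z (Suc 0) - \<beta>"
    by (rule ne_helper2[OF genp_dif[OF g i0(1) i0(2) _ m3]]) (simp_all add: \<alpha>_def \<beta>_def)
  have h4: "z 0 - \<alpha> \<noteq> - (z (Suc 0) - \<beta>)"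
    by (rule ne_helper3[OF genp_sum[OF g i0(1) i0(2) m2]]) (simp add: \<alpha>_def \<beta>_def)
  have "OT 0 (OT 1 (OT 0 (OT 1 G))) z = opK \<nu>0 g0 0 (opR \<kappa> h 0 (opK \<nu>0 g0 0 (opR \<kappa> h 0 G))) (z(0 := (z 0 - \<alpha>) + \<alpha>, Suc 0 := (z (Suc 0) - \<beta>) + \<beta>))"
    unfolding pz o ..
  also have "\<dots> = Kc \<nu>0 (Rc \<kappa> (Kc \<nu>0 (Rc \<kappa> (\<lambda>u v. G (z(0 := u + \<alpha>, Suc 0 := v + \<beta>)))))) (z 0 - \<alpha>) (z (Suc 0) - \<beta>)"
    by (simp only: lK lR)
  also have "\<dots> = Rc \<kappa> (Kc \<nu>0 (Rc \<kappa> (Kc \<nu>0 (\<lambda>u v. G (z(0 := u + \<alpha>, Suc 0 := v + \<beta>)))))) (z 0 - \<alpha>) (z (Suc 0) - \<beta>)"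
    by (rule leftrefl[OF h1 h2 h3 h4])
  also have "\<dots> = opR \<kappa> h 0 (opK \<nu>0 g0 0 (opR \<kappa> h 0 (opK \<nu>0 g0 0 G))) (z(0 := (z 0 - \<alpha>) + \<alpha>, Suc 0 := (z (Suc 0) - \<beta>) + \<beta>))"
    by (simp only: lK lR)
  also have "\<dots> = OT 1 (OT 0 (OT 1 (OT 0 G))) z"
    unfolding pz o ..
  finally show ?thesis .
qed

lemma rel_right:
  assumes g: "genp LL n z"
  shows "OT (n-1) (OT n (OT (n-1) (OT n G))) z = OT n (OT (n-1) (OT n (OT (n-1) G))) z"
proof -
  define p where "p = n - 2"
  define \<beta> where "\<beta> = - gn / 2"
  define \<alpha> where "\<alpha> = - gn / 2 - h"
  have o: "OT (n-1) = opR \<kappa> h p" "OT n = opK \<nu>n gn (Suc p)" using n2 by (auto simp: opT_def p_def Suc_diff_Suc numeral_2_eq_2)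
  have lK: "\<And>H u v. opK \<nu>n gn (Suc p) H (z(p := u + \<alpha>, Suc p := v + \<beta>)) = Kc2 \<nu>n (\<lambda>u v. H (z(p := u + \<alpha>, Suc p := v + \<beta>))) u v"
    by (rule Kloc2) (simp add: \<beta>_def)
  have lR: "\<And>H u v. opR \<kappa> h p H (z(p := u + \<alpha>, Suc p := v + \<beta>)) = Rc \<kappa> (\<lambda>u v. H (z(p := u + \<alpha>, Suc p := v + \<beta>))) u v"
    by (rule Rloc) (simp add: \<alpha>_def \<beta>_def)
  have pz: "z(p := (z p - \<alpha>) + \<alpha>, Suc p := (z (Suc p) - \<beta>) + \<beta>) = z" by simp
  have i0: "p < n" "Suc p < n" using n2 unfolding p_def by auto
  have m1: "- 2 * h - gn \<in> LL" using LLm[of "-2" 0 "-1"] by simp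
  have m2: "- h - gn \<in> LL" using LLm[of "-1" 0 "-1"] by simp
  have m3: "- h \<in> LL" using LLm[of "-1" 0 0] by simp
  have m0: "- gn \<in> LL" using LLm[of 0 0 "-1"] by simp
  have h1: "z p - \<alpha> \<noteq> 0"
    by (rule ne_helper1[OF genp_sum[OF g i0(1) i0(1) m1]]) (simp add: \<alpha>_def algebra_simps)
  have h2: "z (Suc p) - \<beta> \<noteq> 0"
    by (rule ne_helper1[OF genp_sum[OF g i0(2) i0(2) m0]]) (simp add: \<beta>_def)
  have h3: "z p - \<alpha> \<noteq> z (Suc p) - \<beta>"
    by (rule ne_helper2[OF genp_dif[OF g i0(1) i0(2) _ m3]]) (simp_all add: \<alpha>_def \<beta>_def)
  have h4: "z p - \<alpha> \<noteq> - (z (Suc p) - \<beta>)"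
    by (rule ne_helper3[OF genp_sum[OF g i0(1) i0(2) m2]]) (simp add: \<alpha>_def \<beta>_def)
  have "OT (n-1) (OT n (OT (n-1) (OT n G))) z = opR \<kappa> h p (opK \<nu>n gn (Suc p) (opR \<kappa> h p (opK \<nu>n gn (Suc p) G))) (z(p := (z p - \<alpha>) + \<alpha>, Suc p := (z (Suc p) - \<beta>) + \<beta>))"
    unfolding pz o ..
  also have "\<dots> = Rc \<kappa> (Kc2 \<nu>n (Rc \<kappa> (Kc2 \<nu>n (\<lambda>u v. G (z(p := u + \<alpha>, Suc p := v + \<beta>)))))) (z p - \<alpha>) (z (Suc p) - \<beta>)"
    by (simp only: lK lR)
  also have "\<dots> = Kc2 \<nu>n (Rc \<kappa> (Kc2 \<nu>n (Rc \<kappa> (\<lambda>u v. G (z(p := u + \<alpha>, Suc p := v + \<beta>)))))) (z p - \<alpha>) (z (Suc p) - \<beta>)"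
    by (rule rightrefl[OF h1 h2 h3 h4])
  also have "\<dots> = opK \<nu>n gn (Suc p) (opR \<kappa> h p (opK \<nu>n gn (Suc p) (opR \<kappa> h p G))) (z(p := (z p - \<alpha>) + \<alpha>, Suc p := (z (Suc p) - \<beta>) + \<beta>))"
    by (simp only: lK lR)
  also have "\<dots> = OT n (OT (n-1) (OT n (OT (n-1) G))) z"
    unfolding pz o ..
  finally show ?thesis .
qed

lemma rel_braid:
  assumes g: "genp LL n z" and j: "1 \<le> j" "j \<le> n - 2"
  shows "OT j (OT (j+1) (OT j G)) z = OT (j+1) (OT j (OT (j+1) G)) z"
proof -
  define p where "p = j - 1"
  define \<gamma> where "\<gamma> = h + h"
  have o: "OT j = opR \<kappa> h p" "OT (j+1) = opR \<kappa> h (Suc p)" using n2 j by (auto simp: opT_def p_def)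
  have l1: "\<And>H u v w. opR \<kappa> h p H (z(p := u + 0, Suc p := v + h, Suc (Suc p) := w + \<gamma>))
      = R1 \<kappa> (\<lambda>u v w. H (z(p := u + 0, Suc p := v + h, Suc (Suc p) := w + \<gamma>))) u v w"
    by (rule R1loc) simp
  have l2: "\<And>H u v w. opR \<kappa> h (Suc p) H (z(p := u + 0, Suc p := v + h, Suc (Suc p) := w + \<gamma>))
      = R2 \<kappa> (\<lambda>u v w. H (z(p := u + 0, Suc p := v + h, Suc (Suc p) := w + \<gamma>))) u v w"
    by (rule R2loc) (simp add: \<gamma>_def)
  have pz: "z(p := (z p - 0) + 0, Suc p := (z (Suc p) - h) + h, Suc (Suc p) := (z (Suc (Suc p)) - \<gamma>) + \<gamma>) = z" by simp
  have i0: "p < n" "Suc p < n" "Suc (Suc p) < n" using n2 j unfolding p_def by auto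
  have m3: "- h \<in> LL" using LLm[of "-1" 0 0] by simp
  have m4: "- 2 * h \<in> LL" using LLm[of "-2" 0 0] by simp
  have h1: "z p - 0 \<noteq> z (Suc p) - h"
    using genp_dif[OF g i0(1) i0(2) _ m3] by (auto simp: field_simps)
  have h2: "z (Suc p) - h \<noteq> z (Suc (Suc p)) - \<gamma>"
    using genp_dif[OF g i0(2) i0(3) _ m3] unfolding \<gamma>_def by (auto simp: field_simps)
  have h3: "z p - 0 \<noteq> z (Suc (Suc p)) - \<gamma>"
    using genp_dif[OF g i0(1) i0(3) _ m4] unfolding \<gamma>_def by (auto simp: field_simps)
  have "OT j (OT (j+1) (OT j G)) z = opR \<kappa> h p (opR \<kappa> h (Suc p) (opR \<kappa> h p G)) (z(p := (z p - 0) + 0, Suc p := (z (Suc p) - h) + h, Suc (Suc p) := (z (Suc (Suc p)) - \<gamma>) + \<gamma>))"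
    unfolding pz o ..
  also have "\<dots> = R1 \<kappa> (R2 \<kappa> (R1 \<kappa> (\<lambda>u v w. G (z(p := u + 0, Suc p := v + h, Suc (Suc p) := w + \<gamma>))))) (z p - 0) (z (Suc p) - h) (z (Suc (Suc p)) - \<gamma>)"
    by (simp only: l1 l2)
  also have "\<dots> = R2 \<kappa> (R1 \<kappa> (R2 \<kappa> (\<lambda>u v w. G (z(p := u + 0, Suc p := v + h, Suc (Suc p) := w + \<gamma>))))) (z p - 0) (z (Suc p) - h) (z (Suc (Suc p)) - \<gamma>)"
    by (rule braid[OF h1 h2 h3])
  also have "\<dots> = opR \<kappa> h (Suc p) (opR \<kappa> h p (opR \<kappa> h (Suc p) G)) (z(p := (z p - 0) + 0, Suc p := (z (Suc p) - h) + h, Suc (Suc p) := (z (Suc (Suc p)) - \<gamma>) + \<gamma>))"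
    by (simp only: l1 l2)
  also have "\<dots> = OT (j+1) (OT j (OT (j+1) G)) z"
    unfolding pz o ..
  finally show ?thesis .
qed

lemma rel_comm:
  assumes jk: "j + 2 \<le> k" "k \<le> n"
  shows "OT j (OT k G) z = OT k (OT j G) z"
proof -
  consider "j = 0" "k = n" | "j = 0" "k \<noteq> n" | "j \<noteq> 0" "k = n" | "j \<noteq> 0" "k \<noteq> n" by blast
  then show ?thesis
  proof cases
    case 1
    then have "OT j = opK \<nu>0 g0 0" "OT k = opK \<nu>n gn (n-1)" using n2 by (auto simp: opT_def)
    then show ?thesis using n2 by (simp add: comm_KK)
  next
    case 2
    then have "OT j = opK \<nu>0 g0 0" "OT k = opR \<kappa> h (k-1)" using jk by (auto simp: opT_def)
    then show ?thesis using jk 2 by (simp add: comm_KR)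
  next
    case 3
    then have "OT j = opR \<kappa> h (j-1)" "OT k = opK \<nu>n gn (n-1)" using jk by (auto simp: opT_def)
    then show ?thesis using jk 3 by (simp add: comm_KR)
  next
    case 4
    then have e: "OT j = opR \<kappa> h (j-1)" "OT k = opR \<kappa> h (k-1)" using jk by (auto simp: opT_def)
    have c: "Suc (j-1) < k-1" using jk 4 by auto
    show ?thesis unfolding e by (rule comm_RR[OF c])
  qed
qed

lemma chain2:
  assumes "a \<le> n" "b \<le> n" "c \<in> mindex N n"
  shows "eqon LL n (pf N n (\<lambda>r. opmul N n (TT a) (TT b) r c)) (OT a (OT b (mon n c)))"
  by (rule eqon_trans[OF step_T[where X="TT b" and c=c, OF assms(1)] cong_T[OF assms(1) base_T[OF assms(2,3)]]])

lemma chain3: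
  assumes "a \<le> n" "b \<le> n" "d \<le> n" "c \<in> mindex N n"
  shows "eqon LL n (pf N n (\<lambda>r. opmul N n (TT a) (opmul N n (TT b) (TT d)) r c)) (OT a (OT b (OT d (mon n c))))"
  by (rule eqon_trans[OF step_T[where X="opmul N n (TT b) (TT d)" and c=c, OF assms(1)] cong_T[OF assms(1) chain2[OF assms(2,3,4)]]])

lemma chain4:
  assumes "a \<le> n" "b \<le> n" "d \<le> n" "e \<le> n" "c \<in> mindex N n"
  shows "eqon LL n (pf N n (\<lambda>r. opmul N n (TT a) (opmul N n (TT b) (opmul N n (TT d) (TT e))) r c)) (OT a (OT b (OT d (OT e (mon n c)))))"
  by (rule eqon_trans[OF step_T[where X="opmul N n (TT b) (opmul N n (TT d) (TT e))" and c=c, OF assms(1)] cong_T[OF assms(1) chain3[OF assms(2,3,4,5)]]])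

lemma gen_fin:
  assumes "\<forall>c\<in>mindex N n. eqon LL n (pf N n (\<lambda>r. X r c)) (F c) \<and> eqon LL n (pf N n (\<lambda>r. Y r c)) (F' c)
     \<and> (\<forall>z. genp LL n z \<longrightarrow> F c z = F' c z)"
  shows "opeq N n X Y"
  by (rule opeq_from[OF lat_count[of h g0 gn]]) (use assms in \<open>auto simp: eqon_def\<close>)

lemma fin1: "j \<le> n \<Longrightarrow> opeq N n (opmul N n (TT j) (TT j)) opid"
  apply (rule gen_fin[where F="\<lambda>c. OT j (OT j (mon n c))" and F'="\<lambda>c. mon n c"])
  apply (intro ballI conjI allI impI)
  subgoal for c by (rule chain2) auto
  subgoal for c unfolding pf_opid eqon_def by simp
  subgoal for c z by (rule rel_sq)
  done

lemma fin2: "opeq N n (opmul N n (TT 0) (opmul N n (TT 1) (opmul N n (TT 0) (TT 1))))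
                        (opmul N n (TT 1) (opmul N n (TT 0) (opmul N n (TT 1) (TT 0))))"
  apply (rule gen_fin[where F="\<lambda>c. OT 0 (OT 1 (OT 0 (OT 1 (mon n c))))" and F'="\<lambda>c. OT 1 (OT 0 (OT 1 (OT 0 (mon n c))))"])
  apply (intro ballI conjI allI impI)
  subgoal for c by (rule chain4) (use n2 in auto)
  subgoal for c by (rule chain4) (use n2 in auto)
  subgoal for c z by (rule rel_left)
  done

lemma fin3: "1 \<le> j \<Longrightarrow> j \<le> n - 2 \<Longrightarrow>
   opeq N n (opmul N n (TT j) (opmul N n (TT (j+1)) (TT j))) (opmul N n (TT (j+1)) (opmul N n (TT j) (TT (j+1))))"
  apply (rule gen_fin[where F="\<lambda>c. OT j (OT (j+1) (OT j (mon n c)))" and F'="\<lambda>c. OT (j+1) (OT j (OT (j+1) (mon n c)))"])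
  apply (intro ballI conjI allI impI)
  subgoal for c by (rule chain3) (use n2 in auto)
  subgoal for c by (rule chain3) (use n2 in auto)
  subgoal for c z by (rule rel_braid)
  done

lemma fin4: "opeq N n (opmul N n (TT (n-1)) (opmul N n (TT n) (opmul N n (TT (n-1)) (TT n))))
                  (opmul N n (TT n) (opmul N n (TT (n-1)) (opmul N n (TT n) (TT (n-1)))))"
  apply (rule gen_fin[where F="\<lambda>c. OT (n-1) (OT n (OT (n-1) (OT n (mon n c))))" and F'="\<lambda>c. OT n (OT (n-1) (OT n (OT (n-1) (mon n c))))"])
  apply (intro ballI conjI allI impI)
  subgoal for c by (rule chain4) auto
  subgoal for c by (rule chain4) auto
  subgoal for c z by (rule rel_right)
  done

lemma fin5: "j \<le> n \<Longrightarrow> k \<le> n \<Longrightarrow> j + 2 \<le> k \<Longrightarrow> opeq N n (opmul N n (TT j) (TT k)) (opmul N n (TT k) (TT j))"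
  apply (rule gen_fin[where F="\<lambda>c. OT j (OT k (mon n c))" and F'="\<lambda>c. OT k (OT j (mon n c))"])
  apply (intro ballI conjI allI impI)
  subgoal for c by (rule chain2) auto
  subgoal for c by (rule chain2) auto
  subgoal for c z by (rule rel_comm)
  done

end

theorem theorem2:
  fixes N n :: nat and \<kappa> h \<nu>0 g0 \<nu>n gn :: complex
  assumes "N \<ge> 1" and "n \<ge> 2" and "h \<noteq> 0" and "g0 \<noteq> 0" and "gn \<noteq> 0"
  defines "T \<equiv> hatT n \<kappa> h \<nu>0 g0 \<nu>n gn"
  defines "M \<equiv> opmul N n"
  shows "(\<forall>j\<le>n. opeq N n (M (T j) (T j)) opid)
       \<and> opeq N n (M (T 0) (M (T 1) (M (T 0) (T 1)))) (M (T 1) (M (T 0) (M (T 1) (T 0))))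
       \<and> (\<forall>j. 1 \<le> j \<and> j \<le> n - 2 \<longrightarrow>
             opeq N n (M (T j) (M (T (j+1)) (T j))) (M (T (j+1)) (M (T j) (T (j+1)))))
       \<and> opeq N n (M (T (n-1)) (M (T n) (M (T (n-1)) (T n))))
                  (M (T n) (M (T (n-1)) (M (T n) (T (n-1)))))
       \<and> (\<forall>j\<le>n. \<forall>k\<le>n. j + 2 \<le> k \<longrightarrow> opeq N n (M (T j) (T k)) (M (T k) (T j)))"
  unfolding T_def M_def
  apply (intro conjI allI impI)
  subgoal for j by (rule fin1[OF assms(2,3)])
  subgoal by (rule fin2[OF assms(2,3)])
  subgoal for j by (rule fin3[OF assms(2,3)]) auto
  subgoal by (rule fin4[OF assms(2,3)])
  subgoal for j k by (rule fin5[OF assms(2,3)])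
  done


end
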